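(* Let $\mathcal{C}_1$ and $\mathcal{C}_2$ be nice GFG-tNCWs with $L(\mathcal{C}_1)=L(\mathcal{C}_2)$, each minimal (no GFG-tNCW for the same language has fewer states) and each $\alpha$-maximal up to homogeneity. Then $\mathcal{C}_1$ and $\mathcal{C}_2$ are isomorphic.
   Context: A tNCW is $\mathcal{A}=\langle\Sigma,Q,q_0,\delta,\alpha\rangle$: finite alphabet $\Sigma$, finite state set $Q$, initial state $q_0$, transition function $\delta:Q\times\Sigma\to 2^Q\setminus\{\emptyset\}$ with transition relation $\Delta=\{\langle q,\sigma,s\rangle:s\in\delta(q,\sigma)\}$, and $\alpha\subseteq\Delta$; $|\mathcal{A}|=|Q|$. $\alpha$-transitions are those in $\alpha$, $\bar\alpha$-transitions those in $\Delta\setminus\alpha$; $\delta^{\alpha}(q,\sigma)$, $\delta^{\bar\alpha}(q,\sigma)$ denote the $\sigma$-successors via $\alpha$-, resp. $\bar\alpha$-transitions. A run on $w=\sigma_1\sigma_2\cdots$ is $r_0r_1\cdots$ with $r_0=q_0$, $r_{i+1}\in\delta(r_i,\sigma_{i+1})$; accepting iff it traverses $\alpha$-transitions only finitely often; $L(\mathcal{A})$ is the accepted language. $\mathcal{A}^q$ is $\mathcal{A}$ with initial state $q$; $q\sim s$ iff $L(\mathcal{A}^q)=L(\mathcal{A}^s)$. $\mathcal{A}$ is GFG if there is $f:\Sigma^*\to Q$ with $f(\epsilon)=q_0$, $\langle f(u),\sigma,f(u\sigma)\rangle\in\Delta$ for all $u,\sigma$, and for every $w\in L(\mathcal{A})$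 the run $f(w[1,0]),f(w[1,1]),\dots$ is accepting; $q$ is GFG if $\mathcal{A}^q$ is. $\mathcal{A}$ is semantically deterministic if all $\sigma$-successors of any state are pairwise $\sim$-equivalent; safe deterministic if $|\delta^{\bar\alpha}(q,\sigma)|\le1$ always; normal if whenever a path of $\bar\alpha$-transitions leads from $q$ to $s$, one also leads from $s$ to $q$. Nice: all states reachable and GFG, and normal, safe deterministic, semantically deterministic. $\mathcal{A}$ is $\alpha$-homogenous if for all $q,\sigma$, $\delta^{\alpha}(q,\sigma)=\emptyset$ or $\delta^{\bar\alpha}(q,\sigma)=\emptyset$. A triple $\langle q,\sigma,s\rangle\in Q\times\Sigma\times Q$ is an allowed transition of $\mathcal{A}$ if there is $s'$ with $s\sim s'$ and $\langle q,\sigma,s'\rangle\in\Delta$. $\mathcal{A}$ is $\alpha$-maximal up to homogeneity if it is $\alpha$-homogenous and, for every $q\in Q$ and $\sigma\in\Sigma$ with $\delta^{\bar\alpha}(q,\sigma)=\emptyset$, every allowed transition in $\{q\}\times\{\sigma\}\times Q$ is in $\Delta$. For tNCWs $\mathcal{A},\mathcal{B}$, a bijection $\kappa:Q_\mathcal{A}\to Q_\mathcal{B}$ is $\bar\alpha$-transition respecting if for all $q,q',\sigma$: $q'\in\delta^{\bar\alpha}_\mathcal{A}(q,\sigma)$ iff $\kappa(q')\in\delta^{\bar\alpha}_\mathcal{B}(\kappa(q),\sigma)$, and $\alpha$-transition respecting if the same holds with $\delta^{\alpha}$. $\mathcal{A},\mathcal{B}$ are isomorphic if some bijection is both $\alpha$-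 and $\bar\alpha$-transition respecting. *)

theory Defs
  imports Main
begin

record ('q, 'a) tNCW =
  alph   :: "'a set"
  states :: "'q set"
  init   :: 'q
  trans  :: "'q \<Rightarrow> 'a \<Rightarrow> 'q set"
  acc    :: "('q \<times> 'a \<times> 'q) set"

definition Delta :: "('q, 'a) tNCW \<Rightarrow> ('q \<times> 'a \<times> 'q) set" where
  "Delta A = {(q, \<sigma>, s). q \<in> states A \<and> \<sigma> \<in> alph A \<and> s \<in> trans A q \<sigma>}"

definition wf_tNCW :: "('q, 'a) tNCW \<Rightarrow> bool" where
  "wf_tNCW A \<longleftrightarrow> finite (alph A) \<and> finite (states A) \<and> init A \<in> states A \<and>
     (\<forall>q \<in> states A. \<forall>\<sigma> \<in> alph A. trans A q \<sigma> \<noteq> {} \<and> trans A q \<sigma> \<subseteq> states A) \<and>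
     acc A \<subseteq> Delta A"

definition delta_acc :: "('q, 'a) tNCW \<Rightarrow> 'q \<Rightarrow> 'a \<Rightarrow> 'q set" where
  "delta_acc A q \<sigma> = {s. s \<in> trans A q \<sigma> \<and> (q, \<sigma>, s) \<in> acc A}"

definition delta_nacc :: "('q, 'a) tNCW \<Rightarrow> 'q \<Rightarrow> 'a \<Rightarrow> 'q set" where
  "delta_nacc A q \<sigma> = {s. s \<in> trans A q \<sigma> \<and> (q, \<sigma>, s) \<notin> acc A}"

definition is_word :: "('q, 'a) tNCW \<Rightarrow> (nat \<Rightarrow> 'a) \<Rightarrow> bool" where
  "is_word A w \<longleftrightarrow> (\<forall>i. w i \<in> alph A)"

definition is_run :: "('q, 'a) tNCW \<Rightarrow> (nat \<Rightarrow> 'a) \<Rightarrow> (nat \<Rightarrow> 'q) \<Rightarrow> bool" where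
  "is_run A w r \<longleftrightarrow> r 0 = init A \<and> (\<forall>i. r (Suc i) \<in> trans A (r i) (w i))"

definition accepting :: "('q, 'a) tNCW \<Rightarrow> (nat \<Rightarrow> 'a) \<Rightarrow> (nat \<Rightarrow> 'q) \<Rightarrow> bool" where
  "accepting A w r \<longleftrightarrow> finite {i. (r i, w i, r (Suc i)) \<in> acc A}"

definition lang :: "('q, 'a) tNCW \<Rightarrow> (nat \<Rightarrow> 'a) set" where
  "lang A = {w. is_word A w \<and> (\<exists>r. is_run A w r \<and> accepting A w r)}"

definition from_state :: "('q, 'a) tNCW \<Rightarrow> 'q \<Rightarrow> ('q, 'a) tNCW" where
  "from_state A q = A\<lparr>init := q\<rparr>"

definition equiv_st :: "('q, 'a) tNCW \<Rightarrow> 'q \<Rightarrow> 'q \<Rightarrow> bool" where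
  "equiv_st A q s \<longleftrightarrow> lang (from_state A q) = lang (from_state A s)"

definition prefix :: "(nat \<Rightarrow> 'a) \<Rightarrow> nat \<Rightarrow> 'a list" where
  "prefix w i = map w [0..<i]"

definition GFG :: "('q, 'a) tNCW \<Rightarrow> bool" where
  "GFG A \<longleftrightarrow> (\<exists>f :: 'a list \<Rightarrow> 'q.
     f [] = init A \<and>
     (\<forall>u \<in> lists (alph A). \<forall>\<sigma> \<in> alph A. (f u, \<sigma>, f (u @ [\<sigma>])) \<in> Delta A) \<and>
     (\<forall>w \<in> lang A. accepting A w (\<lambda>i. f (prefix w i))))"

definition GFG_state :: "('q, 'a) tNCW \<Rightarrow> 'q \<Rightarrow> bool" where
  "GFG_state A q \<longleftrightarrow> GFG (from_state A q)"

definition sem_det :: "('q, 'a) tNCW \<Rightarrow> bool" where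
  "sem_det A \<longleftrightarrow> (\<forall>q \<in> states A. \<forall>\<sigma> \<in> alph A. \<forall>s \<in> trans A q \<sigma>. \<forall>s' \<in> trans A q \<sigma>.
      equiv_st A s s')"

definition safe_det :: "('q, 'a) tNCW \<Rightarrow> bool" where
  "safe_det A \<longleftrightarrow> (\<forall>q \<in> states A. \<forall>\<sigma> \<in> alph A. card (delta_nacc A q \<sigma>) \<le> 1)"

definition nacc_step :: "('q, 'a) tNCW \<Rightarrow> ('q \<times> 'q) set" where
  "nacc_step A = {(q, s). q \<in> states A \<and> (\<exists>\<sigma> \<in> alph A. s \<in> delta_nacc A q \<sigma>)}"

definition normal :: "('q, 'a) tNCW \<Rightarrow> bool" where
  "normal A \<longleftrightarrow> (\<forall>q s. (q, s) \<in> (nacc_step A)\<^sup>* \<longrightarrow> (s, q) \<in> (nacc_step A)\<^sup>*)"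

definition reachable :: "('q, 'a) tNCW \<Rightarrow> 'q \<Rightarrow> bool" where
  "reachable A q \<longleftrightarrow>
     (init A, q) \<in> {(p, s). p \<in> states A \<and> (\<exists>\<sigma> \<in> alph A. s \<in> trans A p \<sigma>)}\<^sup>*"

definition nice :: "('q, 'a) tNCW \<Rightarrow> bool" where
  "nice A \<longleftrightarrow> (\<forall>q \<in> states A. reachable A q \<and> GFG_state A q) \<and>
     normal A \<and> safe_det A \<and> sem_det A"

text \<open>Competitors are taken with state type nat, which is no loss of generality
since every finite state set can be renamed injectively into nat.\<close>
definition minimal_GFG :: "('q, 'a) tNCW \<Rightarrow> bool" where
  "minimal_GFG A \<longleftrightarrow> GFG A \<and>
     \<not> (\<exists>B :: (nat, 'a) tNCW. wf_tNCW B \<and> alph B = alph A \<and> GFG B \<and>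
          lang B = lang A \<and> card (states B) < card (states A))"

definition alpha_homogenous :: "('q, 'a) tNCW \<Rightarrow> bool" where
  "alpha_homogenous A \<longleftrightarrow> (\<forall>q \<in> states A. \<forall>\<sigma> \<in> alph A.
      delta_acc A q \<sigma> = {} \<or> delta_nacc A q \<sigma> = {})"

definition allowed :: "('q, 'a) tNCW \<Rightarrow> 'q \<Rightarrow> 'a \<Rightarrow> 'q \<Rightarrow> bool" where
  "allowed A q \<sigma> s \<longleftrightarrow> q \<in> states A \<and> \<sigma> \<in> alph A \<and> s \<in> states A \<and>
      (\<exists>s'. equiv_st A s s' \<and> (q, \<sigma>, s') \<in> Delta A)"

definition alpha_maximal_uth :: "('q, 'a) tNCW \<Rightarrow> bool" where
  "alpha_maximal_uth A \<longleftrightarrow> alpha_homogenous A \<and>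
     (\<forall>q \<in> states A. \<forall>\<sigma> \<in> alph A. delta_nacc A q \<sigma> = {} \<longrightarrow>
        (\<forall>s \<in> states A. allowed A q \<sigma> s \<longrightarrow> (q, \<sigma>, s) \<in> Delta A))"

definition isomorphic :: "('q1, 'a) tNCW \<Rightarrow> ('q2, 'a) tNCW \<Rightarrow> bool" where
  "isomorphic A B \<longleftrightarrow> (\<exists>\<kappa>. bij_betw \<kappa> (states A) (states B) \<and>
     (\<forall>q \<in> states A. \<forall>q' \<in> states A. \<forall>\<sigma> \<in> alph A.
        (q' \<in> delta_nacc A q \<sigma> \<longleftrightarrow> \<kappa> q' \<in> delta_nacc B (\<kappa> q) \<sigma>) \<and>
        (q' \<in> delta_acc A q \<sigma> \<longleftrightarrow> \<kappa> q' \<in> delta_acc B (\<kappa> q) \<sigma>)))"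

end

theory Submission
  imports Defs
begin


definition Lq :: "('q,'a) tNCW \<Rightarrow> 'q \<Rightarrow> (nat \<Rightarrow> 'a) set" where
  "Lq A q = lang (from_state A q)"

lemma Lq_iff: "w \<in> Lq A q \<longleftrightarrow> is_word A w \<and> (\<exists>r. r 0 = q \<and> (\<forall>i. r (Suc i) \<in> trans A (r i) (w i))
   \<and> finite {i. (r i, w i, r (Suc i)) \<in> acc A})"
  by (simp add: Lq_def lang_def is_word_def is_run_def accepting_def from_state_def)

lemma lang_Lq: "lang A = Lq A (init A)"
  by (simp add: Lq_def from_state_def)

lemma equiv_st_Lq: "equiv_st A q s \<longleftrightarrow> Lq A q = Lq A s"
  by (simp add: equiv_st_def Lq_def)

definition sfx :: "(nat \<Rightarrow> 'a) \<Rightarrow> nat \<Rightarrow> nat \<Rightarrow> 'a" where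
  "sfx w n = (\<lambda>k. w (k + n))"

definition scons :: "'a \<Rightarrow> (nat \<Rightarrow> 'a) \<Rightarrow> nat \<Rightarrow> 'a" where
  "scons s z = (\<lambda>k. case k of 0 \<Rightarrow> s | Suc j \<Rightarrow> z j)"

lemma scons_0[simp]: "scons s z 0 = s" and scons_Suc[simp]: "scons s z (Suc j) = z j"
  by (simp_all add: scons_def)

lemma sfx_scons[simp]: "sfx (scons s z) (Suc 0) = z"
  by (simp add: sfx_def scons_def)

lemma scons_sfx: "scons (w 0) (sfx w (Suc 0)) = w"
  by (rule ext) (simp add: sfx_def scons_def split: nat.split)

lemma sfx_Suc: "sfx w (Suc n) = sfx (sfx w n) (Suc 0)"
  by (simp add: sfx_def)

lemma sfx_0[simp]: "sfx w 0 = w" by (simp add: sfx_def)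
lemma sfx_apply: "sfx w n k = w (k + n)" by (simp add: sfx_def)

lemma is_word_scons[simp]: "is_word A (scons s z) \<longleftrightarrow> s \<in> alph A \<and> is_word A z"
  by (auto simp: is_word_def scons_def split: nat.split)

lemma is_word_sfx: "is_word A w \<Longrightarrow> is_word A (sfx w n)"
  by (simp add: is_word_def sfx_apply)

lemma Lq_word: "w \<in> Lq A q \<Longrightarrow> is_word A w" by (simp add: Lq_iff)

lemma run_in:
  assumes "wf_tNCW A" "q \<in> states A" "r 0 = q" "\<forall>i. r (Suc i) \<in> trans A (r i) (w i)" "is_word A w"
  shows "r i \<in> states A"
proof (induction i)
  case 0 then show ?case using assms by simp
next
  case (Suc i)
  then show ?case using assms unfolding wf_tNCW_def is_word_def by blast
qed

lemma finite_Suc_set: "finite {i. P i} \<Longrightarrow> finite {i. P (Suc i)}"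
proof -
  assume "finite {i. P i}"
  then have "finite (Suc -` {i. P i})" by (rule finite_vimageI) simp
  then show ?thesis by (simp add: vimage_def)
qed

lemma finite_scons_set: "finite {i. P (Suc i)} \<Longrightarrow> finite {i. P i}"
proof -
  assume a: "finite {i. P (Suc i)}"
  have "{i. P i} \<subseteq> insert 0 (Suc ` {i. P (Suc i)})"
    by (auto simp: image_iff) (metis not0_implies_Suc)
  then show ?thesis using a by (meson finite_imageI finite_insert finite_subset)
qed

lemma Lq_scons:
  assumes wf: "wf_tNCW A" and sd: "sem_det A" and q: "q \<in> states A" and s: "sg \<in> alph A"
    and t: "t \<in> trans A q sg"
  shows "scons sg z \<in> Lq A q \<longleftrightarrow> z \<in> Lq A t"
proof
  assume "scons sg z \<in> Lq A q"
  then obtain r where w: "is_word A (scons sg z)" and r0: "r 0 = q"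
    and rr: "\<forall>i. r (Suc i) \<in> trans A (r i) (scons sg z i)"
    and fin: "finite {i. (r i, scons sg z i, r (Suc i)) \<in> acc A}" by (auto simp: Lq_iff)
  have r1: "r 1 \<in> trans A q sg" using rr r0 by (metis One_nat_def scons_0)
  have "z \<in> Lq A (r 1)"
    unfolding Lq_iff
  proof (intro conjI exI[of _ "\<lambda>i. r (Suc i)"])
    show "is_word A z" using w by simp
    show "\<forall>i. r (Suc (Suc i)) \<in> trans A (r (Suc i)) (z i)" using rr by (metis scons_Suc)
    show "finite {i. (r (Suc i), z i, r (Suc (Suc i))) \<in> acc A}"
      using finite_Suc_set[OF fin] by simp
  qed simp
  moreover have "Lq A (r 1) = Lq A t"
    using sd q s r1 t unfolding sem_det_def equiv_st_Lq by blast
  ultimately show "z \<in> Lq A t" by simp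
next
  assume "z \<in> Lq A t"
  then obtain r where w: "is_word A z" and r0: "r 0 = t"
    and rr: "\<forall>i. r (Suc i) \<in> trans A (r i) (z i)"
    and fin: "finite {i. (r i, z i, r (Suc i)) \<in> acc A}" by (auto simp: Lq_iff)
  define r' where "r' = (\<lambda>k. case k of 0 \<Rightarrow> q | Suc j \<Rightarrow> r j)"
  have r'0: "r' 0 = q" and r'S: "\<And>j. r' (Suc j) = r j" by (simp_all add: r'_def)
  show "scons sg z \<in> Lq A q"
    unfolding Lq_iff
  proof (intro conjI exI[of _ r'])
    show "is_word A (scons sg z)" using w s by simp
    show "\<forall>i. r' (Suc i) \<in> trans A (r' i) (scons sg z i)"
    proof
      fix i show "r' (Suc i) \<in> trans A (r' i) (scons sg z i)"
        using rr t r0 by (cases i) (simp_all add: r'S r'0)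
    qed
    show "finite {i. (r' i, scons sg z i, r' (Suc i)) \<in> acc A}"
      by (rule finite_scons_set) (simp add: r'S fin)
  qed (simp add: r'0)
qed

lemma Lq_sfx:
  assumes "wf_tNCW A" "sem_det A" "q \<in> states A" "is_word A w" "t \<in> trans A q (w 0)"
  shows "w \<in> Lq A q \<longleftrightarrow> sfx w (Suc 0) \<in> Lq A t"
  using Lq_scons[OF assms(1,2,3) _ assms(5), of "sfx w (Suc 0)"] assms(4)
  by (simp add: scons_sfx is_word_def)

lemma succ_equiv:
  assumes wA: "wf_tNCW A" and wB: "wf_tNCW B" and sA: "sem_det A" and sB: "sem_det B"
    and al: "alph A = alph B" and a: "a \<in> states A" and b: "b \<in> states B"
    and eq: "Lq A a = Lq B b" and sg: "sg \<in> alph A"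
    and s: "s \<in> trans A a sg" and t: "t \<in> trans B b sg"
  shows "Lq A s = Lq B t"
proof (intro set_eqI iffI)
  fix z assume "z \<in> Lq A s"
  then have "scons sg z \<in> Lq A a" using Lq_scons[OF wA sA a sg s] by simp
  then have "scons sg z \<in> Lq B b" using eq by simp
  then show "z \<in> Lq B t" using Lq_scons[OF wB sB b _ t] sg al by simp
next
  fix z assume "z \<in> Lq B t"
  then have "scons sg z \<in> Lq B b" using Lq_scons[OF wB sB b _ t] sg al by simp
  then have "scons sg z \<in> Lq A a" using eq by simp
  then show "z \<in> Lq A s" using Lq_scons[OF wA sA a sg s] by simp
qed

fun tpath :: "('q,'a) tNCW \<Rightarrow> 'q \<Rightarrow> 'a list \<Rightarrow> 'q \<Rightarrow> bool" where
  "tpath A p [] q \<longleftrightarrow> q = p"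
| "tpath A p (sg # x) q \<longleftrightarrow> sg \<in> alph A \<and> (\<exists>s \<in> trans A p sg. tpath A s x q)"

fun npath :: "('q,'a) tNCW \<Rightarrow> 'q \<Rightarrow> 'a list \<Rightarrow> 'q \<Rightarrow> bool" where
  "npath A p [] q \<longleftrightarrow> q = p"
| "npath A p (sg # x) q \<longleftrightarrow> sg \<in> alph A \<and> (\<exists>s \<in> delta_nacc A p sg. npath A s x q)"

lemma npath_tpath: "npath A p x q \<Longrightarrow> tpath A p x q"
  by (induction x arbitrary: p) (auto simp: delta_nacc_def)

lemma tpath_in: "wf_tNCW A \<Longrightarrow> p \<in> states A \<Longrightarrow> tpath A p x q \<Longrightarrow> q \<in> states A"
  by (induction x arbitrary: p) (auto simp: wf_tNCW_def)

lemma npath_in: "wf_tNCW A \<Longrightarrow> p \<in> states A \<Longrightarrow> npath A p x q \<Longrightarrow> q \<in> states A"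
  using npath_tpath tpath_in by metis

lemma tpath_exists: "wf_tNCW A \<Longrightarrow> p \<in> states A \<Longrightarrow> x \<in> lists (alph A) \<Longrightarrow> \<exists>q. tpath A p x q"
proof (induction x arbitrary: p)
  case Nil then show ?case by simp
next
  case (Cons a x)
  have a: "a \<in> alph A" using Cons.prems by simp
  have ne: "trans A p a \<noteq> {}" and sub: "trans A p a \<subseteq> states A"
    using Cons.prems(1,2) a unfolding wf_tNCW_def by blast+
  then obtain s where s: "s \<in> trans A p a" by blast
  then have "s \<in> states A" using sub by blast
  then obtain q where "tpath A s x q" using Cons by auto
  then show ?case using s a by auto
qed

lemma tpath_equiv:
  assumes wA: "wf_tNCW A" and wB: "wf_tNCW B" and sA: "sem_det A" and sB: "sem_det B"
    and al: "alph A = alph B"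
  shows "a \<in> states A \<Longrightarrow> b \<in> states B \<Longrightarrow> Lq A a = Lq B b \<Longrightarrow> tpath A a x a' \<Longrightarrow> tpath B b x b'
     \<Longrightarrow> Lq A a' = Lq B b'"
proof (induction x arbitrary: a b)
  case Nil then show ?case by simp
next
  case (Cons sg x)
  from Cons.prems obtain s t where s: "s \<in> trans A a sg" "tpath A s x a'" and t: "t \<in> trans B b sg" "tpath B t x b'"
    and sg: "sg \<in> alph A" by auto
  have "Lq A s = Lq B t" using succ_equiv[OF wA wB sA sB al Cons.prems(1,2,3) sg s(1) t(1)] .
  moreover have "s \<in> states A" "t \<in> states B" using s t Cons.prems wA wB sg al unfolding wf_tNCW_def by blast+
  ultimately show ?case using Cons.IH s t by blast
qed

lemma reachable_tpath:
  assumes "reachable A q"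
  shows "\<exists>x. tpath A (init A) x q"
proof -
  have "(init A, q) \<in> {(p, s). p \<in> states A \<and> (\<exists>sg \<in> alph A. s \<in> trans A p sg)}\<^sup>*"
    using assms by (simp add: reachable_def)
  then show ?thesis
  proof (induction rule: converse_rtrancl_induct)
    case base then show ?case by (metis tpath.simps(1))
  next
    case (step y z)
    then obtain x where "tpath A z x q" by blast
    moreover obtain sg where "sg \<in> alph A" "z \<in> trans A y sg" using step by blast
    ultimately have "tpath A y (sg # x) q" by auto
    then show ?case by blast
  qed
qed

lemma tpath_lists: "tpath A p x q \<Longrightarrow> x \<in> lists (alph A)"
  by (induction x arbitrary: p) auto

lemma nstep_npath:
  assumes "(p, q) \<in> (nacc_step A)\<^sup>*"
  shows "\<exists>x. npath A p x q"
  using assms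
proof (induction rule: converse_rtrancl_induct)
  case base then show ?case by (metis npath.simps(1))
next
  case (step y z)
  then obtain x where "npath A z x q" by blast
  moreover obtain sg where "sg \<in> alph A" "z \<in> delta_nacc A y sg" using step by (auto simp: nacc_step_def)
  ultimately have "npath A y (sg # x) q" by auto
  then show ?case by blast
qed

lemma npath_nstep:
  "wf_tNCW A \<Longrightarrow> p \<in> states A \<Longrightarrow> npath A p x q \<Longrightarrow> (p, q) \<in> (nacc_step A)\<^sup>*"
proof (induction x arbitrary: p)
  case Nil then show ?case by simp
next
  case (Cons sg x)
  then obtain s where s: "s \<in> delta_nacc A p sg" "npath A s x q" and sg: "sg \<in> alph A" by auto
  have "s \<in> states A" using s Cons.prems unfolding wf_tNCW_def delta_nacc_def using sg by blast
  then have "(s, q) \<in> (nacc_step A)\<^sup>*" using Cons s by blast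
  moreover have "(p, s) \<in> nacc_step A" using s sg Cons.prems by (auto simp: nacc_step_def)
  ultimately show ?case by (meson converse_rtrancl_into_rtrancl)
qed



definition safe_run :: "('q,'a) tNCW \<Rightarrow> 'q \<Rightarrow> (nat \<Rightarrow> 'a) \<Rightarrow> (nat \<Rightarrow> 'q) \<Rightarrow> bool" where
  "safe_run A q w r \<longleftrightarrow> r 0 = q \<and> (\<forall>i. r (Suc i) \<in> delta_nacc A (r i) (w i))"

definition Ls :: "('q,'a) tNCW \<Rightarrow> 'q \<Rightarrow> (nat \<Rightarrow> 'a) set" where
  "Ls A q = {w. is_word A w \<and> (\<exists>r. safe_run A q w r)}"

lemma Ls_Lq: "Ls A q \<subseteq> Lq A q"
proof
  fix w assume "w \<in> Ls A q"
  then obtain r where w: "is_word A w" and r: "safe_run A q w r" by (auto simp: Ls_def)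
  have "{i. (r i, w i, r (Suc i)) \<in> acc A} = {}" using r by (auto simp: safe_run_def delta_nacc_def)
  then show "w \<in> Lq A q" unfolding Lq_iff using w r
    by (intro conjI exI[of _ r]) (auto simp: safe_run_def delta_nacc_def)
qed

lemma nacc_unique:
  assumes "wf_tNCW A" "safe_det A" "q \<in> states A" "sg \<in> alph A"
    "s \<in> delta_nacc A q sg" "t \<in> delta_nacc A q sg"
  shows "s = t"
proof -
  have "delta_nacc A q sg \<subseteq> states A" using assms(1,3,4) unfolding wf_tNCW_def delta_nacc_def by blast
  then have "finite (delta_nacc A q sg)" using assms(1) unfolding wf_tNCW_def by (meson finite_subset)
  moreover have "card (delta_nacc A q sg) \<le> Suc 0" using assms(2,3,4) unfolding safe_det_def by auto
  ultimately show ?thesis using assms(5,6) card_le_Suc0_iff_eq by blast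
qed

lemma nacc_in: "wf_tNCW A \<Longrightarrow> q \<in> states A \<Longrightarrow> sg \<in> alph A \<Longrightarrow> s \<in> delta_nacc A q sg \<Longrightarrow> s \<in> states A"
  unfolding wf_tNCW_def delta_nacc_def by blast

lemma Ls_word: "w \<in> Ls A q \<Longrightarrow> is_word A w" by (simp add: Ls_def)

lemma Ls_scons:
  assumes wf: "wf_tNCW A" and sd: "safe_det A" and q: "q \<in> states A" and sg: "sg \<in> alph A"
    and s: "s \<in> delta_nacc A q sg"
  shows "scons sg z \<in> Ls A q \<longleftrightarrow> z \<in> Ls A s"
proof
  assume "scons sg z \<in> Ls A q"
  then obtain r where w: "is_word A (scons sg z)" and r: "safe_run A q (scons sg z) r" by (auto simp: Ls_def)
  have "r 1 \<in> delta_nacc A q sg" using r by (metis One_nat_def safe_run_def scons_0)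
  then have "r 1 = s" using nacc_unique[OF wf sd q sg _ s] by simp
  then have "safe_run A s z (\<lambda>i. r (Suc i))" using r unfolding safe_run_def by (metis One_nat_def scons_Suc)
  then show "z \<in> Ls A s" using w by (auto simp: Ls_def)
next
  assume "z \<in> Ls A s"
  then obtain r where w: "is_word A z" and r: "safe_run A s z r" by (auto simp: Ls_def)
  define r' where "r' = (\<lambda>k. case k of 0 \<Rightarrow> q | Suc j \<Rightarrow> r j)"
  have "safe_run A q (scons sg z) r'"
    unfolding safe_run_def
  proof (intro conjI allI)
    fix i show "r' (Suc i) \<in> delta_nacc A (r' i) (scons sg z i)"
      using r s by (cases i) (auto simp: r'_def safe_run_def)
  qed (simp add: r'_def)
  then show "scons sg z \<in> Ls A q" using w sg by (auto simp: Ls_def)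
qed

lemma npath_unique:
  "wf_tNCW A \<Longrightarrow> safe_det A \<Longrightarrow> p \<in> states A \<Longrightarrow> npath A p x q \<Longrightarrow> npath A p x q' \<Longrightarrow> q = q'"
proof (induction x arbitrary: p)
  case Nil then show ?case by simp
next
  case (Cons sg x)
  then obtain s s' where s: "s \<in> delta_nacc A p sg" "npath A s x q" and s': "s' \<in> delta_nacc A p sg" "npath A s' x q'"
    and sg: "sg \<in> alph A" by auto
  have "s = s'" using nacc_unique[OF Cons.prems(1,2,3) sg s(1) s'(1)] .
  moreover have "s \<in> states A" using nacc_in Cons.prems s sg by metis
  ultimately show ?case using Cons s s' by blast
qed

fun lcons :: "'a list \<Rightarrow> (nat \<Rightarrow> 'a) \<Rightarrow> nat \<Rightarrow> 'a" where
  "lcons [] z = z"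
| "lcons (a # x) z = scons a (lcons x z)"

lemma npath_Ls:
  "wf_tNCW A \<Longrightarrow> safe_det A \<Longrightarrow> p \<in> states A \<Longrightarrow> npath A p x q \<Longrightarrow> (lcons x z \<in> Ls A p \<longleftrightarrow> z \<in> Ls A q)"
proof (induction x arbitrary: p)
  case Nil then show ?case by simp
next
  case (Cons sg x)
  then obtain s where s: "s \<in> delta_nacc A p sg" "npath A s x q" and sg: "sg \<in> alph A" by auto
  have "s \<in> states A" using nacc_in Cons.prems s sg by metis
  then show ?case using Cons.IH[OF Cons.prems(1,2) _ s(2)] Ls_scons[OF Cons.prems(1,2,3) sg s(1)] by simp
qed

lemma npath_snoc: "npath A p (x @ [sg]) q \<longleftrightarrow> (\<exists>m. npath A p x m \<and> sg \<in> alph A \<and> q \<in> delta_nacc A m sg)"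
  by (induction x arbitrary: p) auto

lemma tpath_snoc: "tpath A p (x @ [sg]) q \<longleftrightarrow> (\<exists>m. tpath A p x m \<and> sg \<in> alph A \<and> q \<in> trans A m sg)"
  by (induction x arbitrary: p) auto

lemma npath_append: "npath A p (x @ y) q \<longleftrightarrow> (\<exists>m. npath A p x m \<and> npath A m y q)"
  by (induction x arbitrary: p) auto

lemma prefix_Suc: "prefix w (Suc n) = prefix w n @ [w n]"
  by (simp add: prefix_def)

lemma prefix_0[simp]: "prefix w 0 = []"
  by (simp add: prefix_def)

lemma Ls_char:
  assumes wf: "wf_tNCW A" and sd: "safe_det A" and p: "p \<in> states A" and w: "is_word A w"
    and all: "\<forall>n. \<exists>q. npath A p (prefix w n) q"
  shows "w \<in> Ls A p"
proof -
  define r where "r n = (THE q. npath A p (prefix w n) q)" for n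
  have rn: "npath A p (prefix w n) (r n)" for n
  proof -
    obtain q where q: "npath A p (prefix w n) q" using all by blast
    have "(THE q. npath A p (prefix w n) q) = q"
      using q npath_unique[OF wf sd p] by blast
    then show ?thesis using q r_def by simp
  qed
  have "safe_run A p w r"
    unfolding safe_run_def
  proof (intro conjI allI)
    show "r 0 = p" using rn[of 0] by simp
    fix i
    obtain m where m: "npath A p (prefix w i) m" "r (Suc i) \<in> delta_nacc A m (w i)"
      using rn[of "Suc i"] unfolding prefix_Suc npath_snoc by blast
    have "m = r i" using npath_unique[OF wf sd p m(1) rn[of i]] .
    then show "r (Suc i) \<in> delta_nacc A (r i) (w i)" using m by simp
  qed
  then show ?thesis using w by (auto simp: Ls_def)
qed

lemma safe_run_npath:
  assumes "safe_run A p w r" "is_word A w"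
  shows "npath A p (prefix w n) (r n)"
proof (induction n)
  case 0 then show ?case using assms by (simp add: safe_run_def)
next
  case (Suc n)
  then show ?case using assms unfolding prefix_Suc npath_snoc safe_run_def is_word_def by blast
qed

lemma nacc_Ls_ne:
  assumes wf: "wf_tNCW A" and nm: "normal A" and q: "q \<in> states A" and sg: "sg \<in> alph A"
    and s: "s \<in> delta_nacc A q sg"
  shows "Ls A s \<noteq> {}"
proof -
  define Y where "Y = {y \<in> states A. \<exists>sg \<in> alph A. delta_nacc A y sg \<noteq> {}}"
  have clo: "t \<in> Y" if y: "y \<in> Y" and a: "a \<in> alph A" and t: "t \<in> delta_nacc A y a" for y a t
  proof -
    have yQ: "y \<in> states A" using y Y_def by simp
    have tQ: "t \<in> states A" using nacc_in[OF wf yQ a t] .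
    have "(y, t) \<in> nacc_step A" using yQ a t by (auto simp: nacc_step_def)
    then have "(t, y) \<in> (nacc_step A)\<^sup>*" using nm unfolding normal_def by blast
    then show "t \<in> Y"
    proof (cases rule: converse_rtranclE)
      case base then show ?thesis using y by simp
    next
      case (step m)
      then show ?thesis using tQ unfolding Y_def nacc_step_def by blast
    qed
  qed
  have "\<forall>y\<in>Y. \<exists>pr. fst pr \<in> alph A \<and> snd pr \<in> delta_nacc A y (fst pr)"
    unfolding Y_def by fastforce
  then obtain F where F: "\<And>y. y \<in> Y \<Longrightarrow> fst (F y) \<in> alph A \<and> snd (F y) \<in> delta_nacc A y (fst (F y))"
    by metis
  have qY: "q \<in> Y" using q sg s Y_def by blast
  have sY: "s \<in> Y" using clo[OF qY sg s] .
  define r where "r k = ((snd \<circ> F) ^^ k) s" for k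
  have rY: "r k \<in> Y" for k
  proof (induction k)
    case 0 then show ?case using sY by (simp add: r_def)
  next
    case (Suc k)
    then show ?case using F clo by (simp add: r_def) blast
  qed
  define z where "z k = fst (F (r k))" for k
  have "safe_run A s z r" unfolding safe_run_def
    using F rY by (simp add: r_def z_def)
  moreover have "is_word A z" unfolding is_word_def z_def using F rY by blast
  ultimately show ?thesis by (auto simp: Ls_def)
qed



lemma sfx_scons_eq: "sfx z k = scons (z k) (sfx z (Suc k))"
  by (rule ext) (simp add: scons_def sfx_apply split: nat.split)

lemma Ls_step:
  assumes "z \<in> Ls A q"
  shows "\<exists>s \<in> delta_nacc A q (z 0). sfx z (Suc 0) \<in> Ls A s"
proof -
  obtain r where w: "is_word A z" and r: "safe_run A q z r" using assms by (auto simp: Ls_def)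
  have "safe_run A (r 1) (sfx z (Suc 0)) (\<lambda>i. r (Suc i))" using r by (simp add: safe_run_def sfx_apply)
  moreover have "r 1 \<in> delta_nacc A q (z 0)" using r by (metis One_nat_def safe_run_def)
  ultimately show ?thesis using is_word_sfx[OF w] by (auto simp: Ls_def)
qed

lemma Ls_sfx_run:
  assumes "safe_run A q z r" "is_word A z"
  shows "sfx z k \<in> Ls A (r k)"
proof -
  have "safe_run A (r k) (sfx z k) (\<lambda>i. r (i + k))" using assms by (simp add: safe_run_def sfx_apply)
  then show ?thesis using is_word_sfx[OF assms(2)] by (auto simp: Ls_def)
qed

lemma Lq_run_sfx:
  assumes wf: "wf_tNCW A" and sd: "sem_det A" and q: "q \<in> states A" and w: "is_word A w"
    and r0: "r 0 = q" and rr: "\<forall>i. r (Suc i) \<in> trans A (r i) (w i)"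
  shows "w \<in> Lq A q \<longleftrightarrow> sfx w n \<in> Lq A (r n)"
proof (induction n)
  case 0 then show ?case using r0 by simp
next
  case (Suc n)
  have rn: "r n \<in> states A" using run_in[OF wf q r0 rr w] .
  have "sfx w n \<in> Lq A (r n) \<longleftrightarrow> sfx (sfx w n) (Suc 0) \<in> Lq A (r (Suc n))"
    using Lq_sfx[OF wf sd rn is_word_sfx[OF w], of "r (Suc n)"] rr by (simp add: sfx_apply)
  then show ?case using Suc sfx_Suc[of w n] by argo
qed

definition redD :: "('q,'a) tNCW \<Rightarrow> 'q set \<Rightarrow> ('q \<Rightarrow> 'q) \<Rightarrow> ('q,'a) tNCW" where
  "redD A Q' rho = \<lparr>alph = alph A, states = Q', init = rho (init A),
     trans = (\<lambda>d sg. if delta_nacc A d sg \<noteq> {} then rho ` delta_nacc A d sg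
                    else {d' \<in> Q'. \<exists>s \<in> trans A d sg. Lq A d' = Lq A s}),
     acc = {(d, sg, d'). d \<in> Q' \<and> sg \<in> alph A \<and> delta_nacc A d sg = {} \<and> d' \<in> Q' \<and>
              (\<exists>s \<in> trans A d sg. Lq A d' = Lq A s)}\<rparr>"

lemma redD_simps:
  "alph (redD A Q' rho) = alph A" "states (redD A Q' rho) = Q'" "init (redD A Q' rho) = rho (init A)"
  "trans (redD A Q' rho) d sg = (if delta_nacc A d sg \<noteq> {} then rho ` delta_nacc A d sg
                    else {d' \<in> Q'. \<exists>s \<in> trans A d sg. Lq A d' = Lq A s})"
  by (simp_all add: redD_def)

lemma redD_nacc:
  assumes "d \<in> Q'" "sg \<in> alph A"
  shows "delta_nacc (redD A Q' rho) d sg = (if delta_nacc A d sg \<noteq> {} then rho ` delta_nacc A d sg else {})"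
  using assms by (auto simp: delta_nacc_def redD_def)

lemma redD_acc_iff:
  assumes "d \<in> Q'" "sg \<in> alph A" "d' \<in> trans (redD A Q' rho) d sg"
  shows "(d, sg, d') \<in> acc (redD A Q' rho) \<longleftrightarrow> delta_nacc A d sg = {}"
  using assms by (auto simp: redD_def split: if_splits)

lemma trans_in: "wf_tNCW A \<Longrightarrow> q \<in> states A \<Longrightarrow> sg \<in> alph A \<Longrightarrow> s \<in> trans A q sg \<Longrightarrow> s \<in> states A"
  unfolding wf_tNCW_def by blast

lemma trans_ne: "wf_tNCW A \<Longrightarrow> q \<in> states A \<Longrightarrow> sg \<in> alph A \<Longrightarrow> \<exists>s. s \<in> trans A q sg"
  unfolding wf_tNCW_def by blast

locale red_setup =
  fixes A :: "('q,'a) tNCW" and Q' :: "'q set" and rho :: "'q \<Rightarrow> 'q"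
  assumes wf: "wf_tNCW A" and sem: "sem_det A" and sd: "safe_det A" and nm: "normal A"
    and gfg: "GFG A"
    and sub: "Q' \<subseteq> states A"
    and rho: "\<And>q. q \<in> states A \<Longrightarrow> rho q \<in> Q' \<and> Lq A (rho q) = Lq A q \<and> Ls A q \<subseteq> Ls A (rho q)"
    and rho2: "\<And>d sg s. d \<in> Q' \<Longrightarrow> sg \<in> alph A \<Longrightarrow> s \<in> delta_nacc A d sg \<Longrightarrow> Ls A (rho s) \<subseteq> Ls A s"
begin

abbreviation "D \<equiv> redD A Q' rho"

lemma wfD: "wf_tNCW D"
proof -
  have fin: "finite (alph A)" "finite (states A)" "init A \<in> states A" using wf by (auto simp: wf_tNCW_def)
  have tr: "trans D d sg \<noteq> {} \<and> trans D d sg \<subseteq> Q'" if d: "d \<in> Q'" and sg: "sg \<in> alph A" for d sg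
  proof (cases "delta_nacc A d sg \<noteq> {}")
    case True
    have "delta_nacc A d sg \<subseteq> states A" using nacc_in[OF wf _ sg] d sub by blast
    then show ?thesis using True rho by (auto simp: redD_simps)
  next
    case False
    have dQ: "d \<in> states A" using d sub by blast
    then obtain s where s: "s \<in> trans A d sg" using wf sg unfolding wf_tNCW_def by blast
    then have "s \<in> states A" using wf sg dQ unfolding wf_tNCW_def by blast
    then have "rho s \<in> trans D d sg" using False s rho[of s] by (auto simp: redD_simps)
    then show ?thesis using False by (auto simp: redD_simps)
  qed
  show ?thesis unfolding wf_tNCW_def
  proof (intro conjI)
    show "finite (alph D)" using fin by (simp add: redD_simps)
    show "finite (states D)" using fin sub by (simp add: redD_simps finite_subset)
    show "init D \<in> states D" using fin rho by (simp add: redD_simps)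
    show "\<forall>q\<in>states D. \<forall>sg\<in>alph D. trans D q sg \<noteq> {} \<and> trans D q sg \<subseteq> states D"
      using tr by (simp add: redD_simps)
    show "acc D \<subseteq> Delta D" by (auto simp: redD_def Delta_def)
  qed
qed

lemma sdD: "safe_det D"
  unfolding safe_det_def
proof (intro ballI)
  fix q sg assume q: "q \<in> states D" and sg: "sg \<in> alph D"
  then have q': "q \<in> Q'" "sg \<in> alph A" by (simp_all add: redD_simps)
  have qA: "q \<in> states A" using q' sub by blast
  have fin: "finite (delta_nacc A q sg)"
    using nacc_in[OF wf qA q'(2)] wf unfolding wf_tNCW_def by (meson finite_subset subsetI)
  have "card (rho ` delta_nacc A q sg) \<le> card (delta_nacc A q sg)" using card_image_le[OF fin] .
  also have "\<dots> \<le> 1" using sd qA q' unfolding safe_det_def by blast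
  finally show "card (delta_nacc D q sg) \<le> 1" using redD_nacc[OF q'] by simp
qed

lemma runD_in:
  assumes "d \<in> Q'" "r 0 = d" "\<forall>i. r (Suc i) \<in> trans D (r i) (w i)" "is_word D w"
  shows "r i \<in> Q'"
  using run_in[OF wfD, of d r w i] assms by (simp add: redD_simps)

lemma sfx_0_apply: "sfx z k 0 = z k" by (simp add: sfx_apply)

lemma LsA_LsD:
  assumes d: "d \<in> Q'" and z: "z \<in> Ls A d"
  shows "z \<in> Ls D d"
proof -
  define P where "P k ek s = (s \<in> delta_nacc A ek (z k) \<and> sfx z (Suc k) \<in> Ls A s)" for k ek s
  define e where "e = rec_nat d (\<lambda>k ek. rho (SOME s. P k ek s))"
  have e0: "e 0 = d" and eS: "\<And>k. e (Suc k) = rho (SOME s. P k (e k) s)"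
    by (simp_all add: e_def)
  have zw: "is_word A z" using z by (simp add: Ls_def)
  have stp: "e (Suc k) \<in> Q' \<and> sfx z (Suc k) \<in> Ls A (e (Suc k)) \<and> e (Suc k) \<in> delta_nacc D (e k) (z k)"
    if ek: "e k \<in> Q'" "sfx z k \<in> Ls A (e k)" for k
  proof -
    have eA: "e k \<in> states A" using ek sub by blast
    have zk: "z k \<in> alph A" using zw by (simp add: is_word_def)
    obtain s where "s \<in> delta_nacc A (e k) (z k)" "sfx z (Suc k) \<in> Ls A s"
      using Ls_step[OF ek(2)] by (auto simp: sfx_0_apply sfx_Suc[symmetric])
    then have "P k (e k) s" by (simp add: P_def)
    then have s0: "P k (e k) (SOME s. P k (e k) s)" by (rule someI)
    define s0 where "s0 = (SOME s. P k (e k) s)"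
    have s0n: "s0 \<in> delta_nacc A (e k) (z k)" and s0L: "sfx z (Suc k) \<in> Ls A s0" using s0 by (simp_all add: P_def s0_def)
    have s0A: "s0 \<in> states A" using nacc_in[OF wf eA zk s0n] .
    have "e (Suc k) = rho s0" using eS s0_def by simp
    moreover have "rho s0 \<in> Q'" "Ls A s0 \<subseteq> Ls A (rho s0)" using rho[OF s0A] by auto
    moreover have "rho s0 \<in> delta_nacc D (e k) (z k)"
      using redD_nacc[OF ek(1) zk, of rho] s0n by auto
    ultimately show ?thesis using s0L by auto
  qed
  have inv: "e k \<in> Q' \<and> sfx z k \<in> Ls A (e k)" for k
  proof (induction k)
    case 0 then show ?case using d z e0 by simp
  next
    case (Suc k) then show ?case using stp by blast
  qed
  have "safe_run D d z e" unfolding safe_run_def using e0 inv stp by blast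
  moreover have "is_word D z" using zw by (simp add: is_word_def redD_simps)
  ultimately show ?thesis by (auto simp: Ls_def)
qed

lemma LsD_LsA:
  assumes d: "d \<in> Q'" and z: "z \<in> Ls D d"
  shows "z \<in> Ls A d"
proof -
  obtain e where zw: "is_word D z" and e: "safe_run D d z e" using z by (auto simp: Ls_def)
  have zwA: "is_word A z" using zw by (simp add: is_word_def redD_simps)
  have eQ: "e k \<in> Q'" for k
  proof (induction k)
    case 0 then show ?case using e d by (simp add: safe_run_def)
  next
    case (Suc k)
    have "e (Suc k) \<in> delta_nacc D (e k) (z k)" using e by (simp add: safe_run_def)
    then show ?case using nacc_in[OF wfD, of "e k" "z k" "e (Suc k)"] Suc zw
      by (simp add: redD_simps is_word_def)
  qed
  define P where "P k ak t = (t \<in> delta_nacc A ak (z k) \<and> Ls A t = Ls A (e (Suc k)))" for k ak t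
  define a where "a = rec_nat d (\<lambda>k ak. (SOME t. P k ak t))"
  have a0: "a 0 = d" and aS: "\<And>k. a (Suc k) = (SOME t. P k (a k) t)"
    by (simp_all add: a_def)
  have stp: "a (Suc k) \<in> states A \<and> Ls A (a (Suc k)) = Ls A (e (Suc k)) \<and> a (Suc k) \<in> delta_nacc A (a k) (z k)"
    if ak: "a k \<in> states A" "Ls A (a k) = Ls A (e k)" for k
  proof -
    have zk: "z k \<in> alph A" using zwA by (simp add: is_word_def)
    have ekA: "e k \<in> states A" using eQ sub by blast
    have en: "e (Suc k) \<in> delta_nacc D (e k) (z k)" using e by (simp add: safe_run_def)
    then have ne: "delta_nacc A (e k) (z k) \<noteq> {}" using redD_nacc[OF eQ[of k] zk, of rho] by (auto split: if_splits)
    then obtain s where s: "s \<in> delta_nacc A (e k) (z k)" "e (Suc k) = rho s"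
      using en redD_nacc[OF eQ[of k] zk, of rho] by auto
    have sA: "s \<in> states A" using nacc_in[OF wf ekA zk s(1)] .
    obtain y where y: "y \<in> Ls A s" using nacc_Ls_ne[OF wf nm ekA zk s(1)] by blast
    have "scons (z k) y \<in> Ls A (e k)" using Ls_scons[OF wf sd ekA zk s(1)] y by simp
    then have "scons (z k) y \<in> Ls A (a k)" using ak by simp
    then obtain t where t: "t \<in> delta_nacc A (a k) (z k)" using Ls_step by fastforce
    have "Ls A t = Ls A s"
    proof (intro set_eqI)
      fix y'
      have "y' \<in> Ls A t \<longleftrightarrow> scons (z k) y' \<in> Ls A (a k)" using Ls_scons[OF wf sd ak(1) zk t] by simp
      also have "\<dots> \<longleftrightarrow> scons (z k) y' \<in> Ls A (e k)" using ak by simp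
      also have "\<dots> \<longleftrightarrow> y' \<in> Ls A s" using Ls_scons[OF wf sd ekA zk s(1)] by simp
      finally show "y' \<in> Ls A t \<longleftrightarrow> y' \<in> Ls A s" .
    qed
    also have "\<dots> = Ls A (rho s)" using rho[OF sA] rho2[OF eQ[of k] zk s(1)] by blast
    finally have "P k (a k) t" using t s(2) by (simp add: P_def)
    then have "P k (a k) (a (Suc k))" unfolding aS by (rule someI)
    then show ?thesis using nacc_in[OF wf ak(1) zk] by (auto simp: P_def)
  qed
  have inv: "a k \<in> states A \<and> Ls A (a k) = Ls A (e k)" for k
  proof (induction k)
    case 0 then show ?case using d sub a0 e by (auto simp: safe_run_def)
  next
    case (Suc k) then show ?case using stp by blast
  qed
  have "safe_run A d z a" unfolding safe_run_def using a0 inv stp by blast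
  then show ?thesis using zwA by (auto simp: Ls_def)
qed


lemma transD_in: "d \<in> Q' \<Longrightarrow> sg \<in> alph A \<Longrightarrow> x \<in> trans D d sg \<Longrightarrow> x \<in> Q'"
  using trans_in[OF wfD, of d sg x] by (simp only: redD_simps(1,2))

lemma transD_Lq:
  assumes d: "d \<in> Q'" and sg: "sg \<in> alph A" and x: "x \<in> trans D d sg"
  shows "\<exists>s \<in> trans A d sg. Lq A x = Lq A s"
proof (cases "delta_nacc A d sg \<noteq> {}")
  case True
  then obtain s where s: "s \<in> delta_nacc A d sg" "x = rho s" using x by (auto simp: redD_simps)
  have "s \<in> states A" using nacc_in[OF wf _ sg s(1)] d sub by blast
  then show ?thesis using s rho by (auto simp: delta_nacc_def)
next
  case False
  then show ?thesis using x by (auto simp: redD_simps)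
qed

lemma langD_sub: "lang D \<subseteq> lang A"
proof
  fix w assume "w \<in> lang D"
  then have "w \<in> Lq D (init D)" by (simp add: lang_Lq)
  then obtain e where zw: "is_word D w" and e0: "e 0 = rho (init A)"
    and ee: "\<forall>i. e (Suc i) \<in> trans D (e i) (w i)" and fin: "finite {i. (e i, w i, e (Suc i)) \<in> acc D}"
    by (auto simp: Lq_iff redD_simps)
  have initA: "init A \<in> states A" using wf by (simp add: wf_tNCW_def)
  have wA: "is_word A w" using zw by (simp add: is_word_def redD_simps)
  have eQ: "e k \<in> Q'" for k using runD_in[of "rho (init A)" e w k] e0 ee zw rho[OF initA] by simp
  define r where "r = rec_nat (init A) (\<lambda>k rk. SOME s. s \<in> trans A rk (w k))"
  have r0: "r 0 = init A" and rS: "\<And>k. r (Suc k) = (SOME s. s \<in> trans A (r k) (w k))" by (simp_all add: r_def)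
  have rin: "r k \<in> states A \<and> r (Suc k) \<in> trans A (r k) (w k)" for k
  proof (induction k)
    case 0
    have "r (Suc 0) \<in> trans A (r 0) (w 0)" unfolding rS
      using trans_ne[OF wf initA, of "w 0"] wA r0 by (simp add: is_word_def) (metis someI)
    then show ?case using initA r0 by simp
  next
    case (Suc k)
    have rk: "r (Suc k) \<in> states A" using Suc trans_in[OF wf, of "r k" "w k"] wA by (simp add: is_word_def)
    moreover have "r (Suc (Suc k)) \<in> trans A (r (Suc k)) (w (Suc k))" unfolding rS[of "Suc k"]
      using trans_ne[OF wf rk, of "w (Suc k)"] wA by (simp add: is_word_def) (metis someI)
    ultimately show ?case by simp
  qed
  have eq: "Lq A (e k) = Lq A (r k)" for k
  proof (induction k)
    case 0 then show ?case using e0 r0 rho[OF initA] by simp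
  next
    case (Suc k)
    have wk: "w k \<in> alph A" using wA by (simp add: is_word_def)
    obtain s where s: "s \<in> trans A (e k) (w k)" "Lq A (e (Suc k)) = Lq A s"
      using transD_Lq[OF eQ[of k] wk] ee by blast
    have "Lq A s = Lq A (r (Suc k))"
      using succ_equiv[OF wf wf sem sem refl _ _ Suc wk s(1), of "r (Suc k)"] eQ[of k] sub rin[of k] by blast
    then show ?case using s by simp
  qed
  obtain i where i: "\<forall>k \<in> {i. (e i, w i, e (Suc i)) \<in> acc D}. k < i"
    using fin finite_nat_set_iff_bounded by blast
  have "safe_run D (e i) (sfx w i) (\<lambda>j. e (j + i))"
    unfolding safe_run_def
  proof (intro conjI allI)
    fix j
    have "(e (j + i), w (j + i), e (Suc (j + i))) \<notin> acc D" using i by auto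
    then show "e (Suc j + i) \<in> delta_nacc D (e (j + i)) (sfx w i j)"
      using ee by (simp add: delta_nacc_def sfx_apply)
  qed simp
  then have "sfx w i \<in> Ls D (e i)" using is_word_sfx[OF zw] by (auto simp: Ls_def)
  then have "sfx w i \<in> Ls A (e i)" using LsD_LsA eQ[of i] by blast
  then have "sfx w i \<in> Lq A (r i)" using Ls_Lq[of A "e i"] eq[of i] by blast
  then have "w \<in> Lq A (init A)"
    using Lq_run_sfx[where r=r and n=i, OF wf sem initA wA r0] rin by simp
  then show "w \<in> lang A" by (simp add: lang_Lq)
qed

lemma GFG_D: "GFG D \<and> lang A \<subseteq> lang D"
proof -
  obtain g where g0: "g [] = init A"
    and gD: "\<forall>u \<in> lists (alph A). \<forall>sg \<in> alph A. (g u, sg, g (u @ [sg])) \<in> Delta A"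
    and gacc: "\<forall>w \<in> lang A. accepting A w (\<lambda>i. g (prefix w i))"
    using gfg unfolding GFG_def by blast
  have initA: "init A \<in> states A" using wf by (simp add: wf_tNCW_def)
  have gin: "u \<in> lists (alph A) \<Longrightarrow> g u \<in> states A" for u
  proof (induction u rule: rev_induct)
    case Nil then show ?case using g0 initA by simp
  next
    case (snoc x xs)
    then have "xs \<in> lists (alph A)" "x \<in> alph A" by auto
    then have "g (xs @ [x]) \<in> trans A (g xs) x" using gD by (auto simp: Delta_def)
    then show ?case using trans_in[OF wf snoc.IH] snoc.prems \<open>x \<in> alph A\<close> by auto
  qed
  define stp where "stp u sg d = (if delta_nacc D d sg \<noteq> {} then (SOME x. x \<in> delta_nacc D d sg)
     else (SOME d'. d' \<in> trans D d sg \<and> Lq A d' = Lq A (g (u @ [sg])) \<and> Ls A (g (u @ [sg])) \<subseteq> Ls D d'))"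
    for u sg d
  define hr where "hr = rec_list (init D) (\<lambda>sg v hv. stp (rev v) sg hv)"
  define h where "h u = hr (rev u)" for u
  have h0: "h [] = init D" by (simp add: h_def hr_def)
  have hS: "h (u @ [sg]) = stp u sg (h u)" for u sg by (simp add: h_def hr_def)
  have hstep: "h (u @ [sg]) \<in> trans D (h u) sg \<and> Lq A (h (u @ [sg])) = Lq A (g (u @ [sg])) \<and>
      (delta_nacc A (h u) sg = {} \<longrightarrow> Ls A (g (u @ [sg])) \<subseteq> Ls D (h (u @ [sg])))"
    if u: "u \<in> lists (alph A)" and hu: "h u \<in> Q'" and eq: "Lq A (h u) = Lq A (g u)" and sg: "sg \<in> alph A"
    for u sg
  proof -
    define d where "d = h u"
    have dA: "d \<in> states A" using hu sub d_def by blast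
    have gu: "g u \<in> states A" using gin[OF u] .
    have gs: "g (u @ [sg]) \<in> trans A (g u) sg" using gD u sg by (auto simp: Delta_def)
    have gsA: "g (u @ [sg]) \<in> states A" using trans_in[OF wf gu sg gs] .
    have key: "Lq A s = Lq A (g (u @ [sg]))" if "s \<in> trans A d sg" for s
      using succ_equiv[OF wf wf sem sem refl dA gu _ sg that gs] eq d_def by simp
    show ?thesis
    proof (cases "delta_nacc A d sg \<noteq> {}")
      case True
      then have ne: "delta_nacc D d sg \<noteq> {}" using redD_nacc[OF hu[folded d_def] sg, of rho] by simp
      have hx: "h (u @ [sg]) = (SOME x. x \<in> delta_nacc D d sg)" using hS ne stp_def d_def by simp
      have "(SOME x. x \<in> delta_nacc D d sg) \<in> delta_nacc D d sg" using ne by (simp add: some_in_eq)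
      then have hn: "h (u @ [sg]) \<in> delta_nacc D d sg" using hx by simp
      then obtain s where s: "s \<in> delta_nacc A d sg" "h (u @ [sg]) = rho s"
        using redD_nacc[OF hu[folded d_def] sg, of rho] True by auto
      have sA: "s \<in> states A" using nacc_in[OF wf dA sg s(1)] .
      have "Lq A (h (u @ [sg])) = Lq A s" using s(2) rho[OF sA] by simp
      also have "\<dots> = Lq A (g (u @ [sg]))" using key s(1) by (simp add: delta_nacc_def)
      finally have lq: "Lq A (h (u @ [sg])) = Lq A (g (u @ [sg]))" .
      have "h (u @ [sg]) \<in> trans D d sg" using hn by (simp add: delta_nacc_def)
      then show ?thesis using lq True d_def by blast
    next
      case False
      then have ne: "delta_nacc D d sg = {}" using redD_nacc[OF hu[folded d_def] sg, of rho] by simp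
      have hx: "h (u @ [sg]) = (SOME d'. d' \<in> trans D d sg \<and> Lq A d' = Lq A (g (u @ [sg])) \<and> Ls A (g (u @ [sg])) \<subseteq> Ls D d')"
        using hS ne stp_def d_def by simp
      obtain s0 where s0: "s0 \<in> trans A d sg" using trans_ne[OF wf dA sg] by blast
      have r1: "rho (g (u @ [sg])) \<in> Q'" "Lq A (rho (g (u @ [sg]))) = Lq A (g (u @ [sg]))"
        "Ls A (g (u @ [sg])) \<subseteq> Ls A (rho (g (u @ [sg])))" using rho[OF gsA] by auto
      have "rho (g (u @ [sg])) \<in> trans D d sg"
        using False r1 s0 key[OF s0] by (auto simp: redD_simps)
      moreover have "Ls A (g (u @ [sg])) \<subseteq> Ls D (rho (g (u @ [sg])))"
        using r1 LsA_LsD by blast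
      ultimately have "\<exists>d'. d' \<in> trans D d sg \<and> Lq A d' = Lq A (g (u @ [sg])) \<and> Ls A (g (u @ [sg])) \<subseteq> Ls D d'"
        using r1 by blast
      then have "h (u @ [sg]) \<in> trans D d sg \<and> Lq A (h (u @ [sg])) = Lq A (g (u @ [sg])) \<and> Ls A (g (u @ [sg])) \<subseteq> Ls D (h (u @ [sg]))"
        unfolding hx by (rule someI_ex)
      then show ?thesis using d_def by simp
    qed
  qed
  have hinv: "u \<in> lists (alph A) \<Longrightarrow> h u \<in> Q' \<and> Lq A (h u) = Lq A (g u)" for u
  proof (induction u rule: rev_induct)
    case Nil then show ?case using h0 g0 rho[OF initA] by (simp add: redD_simps)
  next
    case (snoc x xs)
    then have xs: "xs \<in> lists (alph A)" "x \<in> alph A" by auto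
    then have ih: "h xs \<in> Q'" "Lq A (h xs) = Lq A (g xs)" using snoc by auto
    have "h (xs @ [x]) \<in> trans D (h xs) x" using hstep[OF xs(1) ih xs(2)] by blast
    then have "h (xs @ [x]) \<in> Q'" using transD_in ih xs by blast
    then show ?case using hstep[OF xs(1) ih xs(2)] by blast
  qed
  have hD: "\<forall>u \<in> lists (alph D). \<forall>sg \<in> alph D. (h u, sg, h (u @ [sg])) \<in> Delta D"
    using hinv hstep by (auto simp: Delta_def redD_simps)
  have main: "w \<in> lang D \<and> accepting D w (\<lambda>i. h (prefix w i))" if w: "w \<in> lang A" for w
  proof -
    have wA: "is_word A w" using w by (simp add: lang_def)
    have pl: "prefix w k \<in> lists (alph A)" for k using wA by (auto simp: prefix_def is_word_def)
    define d where "d k = h (prefix w k)" for k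
    define a where "a k = g (prefix w k)" for k
    have dQ: "d k \<in> Q'" "Lq A (d k) = Lq A (a k)" for k using hinv[OF pl] d_def a_def by auto
    have wk: "w k \<in> alph A" for k using wA by (simp add: is_word_def)
    have dstep: "d (Suc k) \<in> trans D (d k) (w k) \<and>
      (delta_nacc A (d k) (w k) = {} \<longrightarrow> Ls A (a (Suc k)) \<subseteq> Ls D (d (Suc k)))" for k
      using hstep[OF pl dQ(1)[unfolded d_def] dQ(2)[unfolded d_def a_def] wk] unfolding d_def a_def prefix_Suc by blast
    have astep: "(a k, w k, a (Suc k)) \<in> Delta A" for k using gD pl wk unfolding a_def prefix_Suc by blast
    have "finite {i. (a i, w i, a (Suc i)) \<in> acc A}" using gacc w by (simp add: accepting_def a_def)
    then obtain i0 where i0: "\<forall>k \<in> {i. (a i, w i, a (Suc i)) \<in> acc A}. k < i0"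
      using finite_nat_set_iff_bounded by blast
    have safeA: "sfx w k \<in> Ls A (a k)" if "k \<ge> i0" for k
    proof -
      have "safe_run A (a k) (sfx w k) (\<lambda>j. a (j + k))"
        unfolding safe_run_def
      proof (intro conjI allI)
        fix j
        have "(a (j + k), w (j + k), a (Suc (j + k))) \<notin> acc A" using i0 that by force
        then show "a (Suc j + k) \<in> delta_nacc A (a (j + k)) (sfx w k j)"
          using astep[of "j + k"] by (simp add: delta_nacc_def sfx_apply Delta_def)
      qed simp
      then show ?thesis using is_word_sfx[OF wA] by (auto simp: Ls_def)
    qed
    define SD where "SD = {i. (d i, w i, d (Suc i)) \<in> acc D}"
    have notSD: "k \<notin> SD" if sk: "sfx w k \<in> Ls D (d k)" for k
    proof -
      obtain t where "t \<in> delta_nacc D (d k) (w k)" using Ls_step[OF sk] by (auto simp: sfx_0_apply)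
      then have "delta_nacc A (d k) (w k) \<noteq> {}" using redD_nacc[OF dQ(1) wk, of rho] by (auto split: if_splits)
      then show ?thesis using redD_acc_iff[OF dQ(1) wk] dstep SD_def by auto
    qed
    have propag: "sfx w (Suc (k + n)) \<in> Ls D (d (Suc (k + n)))" if "sfx w (Suc k) \<in> Ls D (d (Suc k))" for k n
    proof (induction n)
      case 0 then show ?case using that by simp
    next
      case (Suc n)
      define m where "m = Suc (k + n)"
      have IH: "sfx w m \<in> Ls D (d m)" using Suc m_def by simp
      obtain t where t: "t \<in> delta_nacc D (d m) (w m)" "sfx w (Suc m) \<in> Ls D t"
        using Ls_step[OF IH] by (auto simp: sfx_0_apply sfx_Suc[symmetric])
      have ne: "delta_nacc D (d m) (w m) \<noteq> {}" using t by blast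
      have "d (Suc m) = (SOME x. x \<in> delta_nacc D (d m) (w m))"
        using hS ne unfolding d_def prefix_Suc stp_def by simp
      then have "d (Suc m) \<in> delta_nacc D (d m) (w m)" using ne by (simp add: some_in_eq)
      then have "d (Suc m) = t" using nacc_unique[OF wfD sdD, of "d m" "w m"] t dQ(1)[of m] wk[of m]
        by (simp add: redD_simps)
      then show ?case using t m_def by simp
    qed
    have fin: "finite SD"
    proof (cases "\<exists>k \<in> SD. k \<ge> i0")
      case True
      then obtain k where k: "k \<in> SD" "k \<ge> i0" by blast
      then have "delta_nacc A (d k) (w k) = {}" using redD_acc_iff[OF dQ(1) wk] dstep SD_def by auto
      then have "sfx w (Suc k) \<in> Ls D (d (Suc k))" using dstep safeA[of "Suc k"] k(2) by auto
      then have "m \<notin> SD" if mk: "m > k" for m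
      proof -
        have "m = Suc (k + (m - Suc k))" using mk by arith
        then show ?thesis using propag[of k "m - Suc k"] notSD \<open>sfx w (Suc k) \<in> Ls D (d (Suc k))\<close> by metis
      qed
      then have "SD \<subseteq> {..k}" by (meson atMost_iff not_le subsetI)
      then show ?thesis using finite_subset by blast
    next
      case False
      then have "SD \<subseteq> {..<i0}" by auto
      then show ?thesis using finite_subset by blast
    qed
    have run: "is_run D w (\<lambda>i. h (prefix w i))"
      unfolding is_run_def using h0 dstep d_def by (simp add: redD_simps)
    have "is_word D w" using wA by (simp add: is_word_def redD_simps)
    then show ?thesis using run fin by (auto simp: lang_def accepting_def SD_def d_def)
  qed
  show ?thesis unfolding GFG_def using h0 hD main langD_sub by blast
qed

theorem red_main: "wf_tNCW D \<and> alph D = alph A \<and> states D = Q' \<and> lang D = lang A \<and> GFG D"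
  using wfD GFG_D langD_sub by (auto simp: redD_simps)

end


lemma rename_nat:
  fixes D :: "('q,'a) tNCW"
  assumes wf: "wf_tNCW D" and gf: "GFG D"
  shows "\<exists>B :: (nat,'a) tNCW. wf_tNCW B \<and> alph B = alph D \<and> GFG B \<and> lang B = lang D \<and>
           card (states B) = card (states D)"
proof -
  define Q where "Q = states D"
  have finQ: "finite Q" using wf by (simp add: wf_tNCW_def Q_def)
  obtain f :: "'q \<Rightarrow> nat" and n where "f ` Q = {i. i < n}" and inj: "inj_on f Q"
    using finite_imp_inj_to_nat_seg[OF finQ] by blast
  define g where "g = inv_into Q f"
  have gf_id: "x \<in> Q \<Longrightarrow> g (f x) = x" for x using inj by (simp add: g_def)
  have fg_id: "y \<in> f ` Q \<Longrightarrow> f (g y) = y" for y by (simp add: g_def f_inv_into_f)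
  have gQ: "y \<in> f ` Q \<Longrightarrow> g y \<in> Q" for y by (simp add: g_def inv_into_into)
  define B :: "(nat,'a) tNCW" where "B = \<lparr>alph = alph D, states = f ` Q, init = f (init D),
     trans = (\<lambda>m sg. f ` trans D (g m) sg), acc = (\<lambda>(a, sg, b). (f a, sg, f b)) ` acc D\<rparr>"
  have Bs: "alph B = alph D" "states B = f ` Q" "init B = f (init D)" "trans B m sg = f ` trans D (g m) sg"
    "acc B = (\<lambda>(a, sg, b). (f a, sg, f b)) ` acc D" for m sg by (simp_all add: B_def)
  have initQ: "init D \<in> Q" using wf by (simp add: wf_tNCW_def Q_def)
  have trQ: "a \<in> Q \<Longrightarrow> sg \<in> alph D \<Longrightarrow> trans D a sg \<subseteq> Q \<and> trans D a sg \<noteq> {}" for a sg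
    using wf by (auto simp: wf_tNCW_def Q_def)
  have accD: "(a, sg, b) \<in> acc D \<Longrightarrow> a \<in> Q \<and> b \<in> Q \<and> sg \<in> alph D \<and> b \<in> trans D a sg" for a sg b
    using wf by (auto simp: wf_tNCW_def Delta_def Q_def)
  have accB: "a \<in> Q \<Longrightarrow> b \<in> Q \<Longrightarrow> (f a, sg, f b) \<in> acc B \<longleftrightarrow> (a, sg, b) \<in> acc D" for a b sg
  proof
    assume a: "a \<in> Q" "b \<in> Q" and "(f a, sg, f b) \<in> acc B"
    then obtain a' b' where ab: "(a', sg, b') \<in> acc D" "f a = f a'" "f b = f b'" by (auto simp: Bs)
    then have "a' \<in> Q" "b' \<in> Q" using accD by auto
    then have "a = a'" "b = b'" using inj ab a by (auto dest: inj_onD)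
    then show "(a, sg, b) \<in> acc D" using ab by simp
  next
    assume "(a, sg, b) \<in> acc D"
    then show "(f a, sg, f b) \<in> acc B" by (force simp: Bs)
  qed
  have wfB: "wf_tNCW B" unfolding wf_tNCW_def
  proof (intro conjI ballI)
    show "finite (alph B)" using wf by (simp add: Bs wf_tNCW_def)
    show "finite (states B)" using finQ by (simp add: Bs)
    show "init B \<in> states B" using initQ by (simp add: Bs)
    fix q sg assume q: "q \<in> states B" and sg: "sg \<in> alph B"
    then have "g q \<in> Q" using gQ by (simp add: Bs)
    then show "trans B q sg \<noteq> {}" "trans B q sg \<subseteq> states B" using trQ sg by (auto simp: Bs)
  next
    show "acc B \<subseteq> Delta B"
    proof
      fix t assume "t \<in> acc B"
      then obtain a sg b where t: "t = (f a, sg, f b)" "(a, sg, b) \<in> acc D" by (auto simp: Bs)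
      then show "t \<in> Delta B" using accD[OF t(2)] gf_id by (auto simp: Bs Delta_def)
    qed
  qed
  have runD: "is_word D w \<Longrightarrow> r 0 = init D \<Longrightarrow> \<forall>i. r (Suc i) \<in> trans D (r i) (w i) \<Longrightarrow> r i \<in> Q" for w r i
    using run_in[OF wf, of "init D" r w i] initQ by (simp add: Q_def)
  have runB: "is_word B w \<Longrightarrow> r 0 = init B \<Longrightarrow> \<forall>i. r (Suc i) \<in> trans B (r i) (w i) \<Longrightarrow> r i \<in> f ` Q" for w r i
    using run_in[OF wfB, of "init B" r w i] wfB by (simp add: Bs wf_tNCW_def)
  have langs: "lang B = lang D"
  proof (intro set_eqI iffI)
    fix w assume "w \<in> lang B"
    then obtain r where w: "is_word B w" and r0: "r 0 = init B" and rr: "\<forall>i. r (Suc i) \<in> trans B (r i) (w i)"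
      and fin: "finite {i. (r i, w i, r (Suc i)) \<in> acc B}"
      by (auto simp: lang_def is_run_def accepting_def)
    have rQ: "r i \<in> f ` Q" for i using runB[OF w r0 rr] .
    have rr': "\<forall>i. g (r (Suc i)) \<in> trans D (g (r i)) (w i)"
    proof
      fix i
      obtain x where x: "x \<in> trans D (g (r i)) (w i)" "r (Suc i) = f x" using rr by (auto simp: Bs)
      have "w i \<in> alph D" using w by (simp add: is_word_def Bs)
      then have "x \<in> Q" using trQ[OF gQ[OF rQ[of i]]] x by blast
      then show "g (r (Suc i)) \<in> trans D (g (r i)) (w i)" using x gf_id by simp
    qed
    have "{i. (g (r i), w i, g (r (Suc i))) \<in> acc D} = {i. (r i, w i, r (Suc i)) \<in> acc B}"
      using accB[of "g (r _)" "g (r (Suc _))"] gQ rQ fg_id by (metis (no_types, lifting))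
    then show "w \<in> lang D" using fin rr' w r0 gf_id initQ
      by (auto simp: lang_def is_run_def accepting_def Bs is_word_def intro!: exI[of _ "g \<circ> r"])
  next
    fix w assume "w \<in> lang D"
    then obtain r where w: "is_word D w" and r0: "r 0 = init D" and rr: "\<forall>i. r (Suc i) \<in> trans D (r i) (w i)"
      and fin: "finite {i. (r i, w i, r (Suc i)) \<in> acc D}"
      by (auto simp: lang_def is_run_def accepting_def)
    have rQ: "r i \<in> Q" for i using runD[OF w r0 rr] .
    have rr': "\<forall>i. f (r (Suc i)) \<in> trans B (f (r i)) (w i)"
      using rr gf_id rQ by (auto simp: Bs)
    have "{i. (f (r i), w i, f (r (Suc i))) \<in> acc B} = {i. (r i, w i, r (Suc i)) \<in> acc D}"
      using accB rQ by blast
    then show "w \<in> lang B" using fin rr' w r0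
      by (auto simp: lang_def is_run_def accepting_def Bs is_word_def intro!: exI[of _ "f \<circ> r"])
  qed
  have gfgB: "GFG B"
  proof -
    obtain s where s0: "s [] = init D"
      and sD: "\<forall>u \<in> lists (alph D). \<forall>sg \<in> alph D. (s u, sg, s (u @ [sg])) \<in> Delta D"
      and sacc: "\<forall>w \<in> lang D. accepting D w (\<lambda>i. s (prefix w i))"
      using gf unfolding GFG_def by blast
    have sQ: "u \<in> lists (alph D) \<Longrightarrow> s u \<in> Q" for u
    proof (induction u rule: rev_induct)
      case Nil then show ?case using s0 initQ by simp
    next
      case (snoc x xs)
      then have "xs \<in> lists (alph D)" "x \<in> alph D" by auto
      then have "s (xs @ [x]) \<in> trans D (s xs) x" using sD by (auto simp: Delta_def)
      then show ?case using trQ[OF snoc.IH[OF \<open>xs \<in> lists (alph D)\<close>] \<open>x \<in> alph D\<close>] by blast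
    qed
    have "(f \<circ> s) [] = init B" using s0 by (simp add: Bs)
    moreover have "\<forall>u \<in> lists (alph B). \<forall>sg \<in> alph B. ((f \<circ> s) u, sg, (f \<circ> s) (u @ [sg])) \<in> Delta B"
      using sD sQ gf_id by (auto simp: Bs Delta_def)
    moreover have "\<forall>w \<in> lang B. accepting B w (\<lambda>i. (f \<circ> s) (prefix w i))"
    proof
      fix w assume wB: "w \<in> lang B"
      then have wD: "w \<in> lang D" using langs by simp
      have pl: "prefix w i \<in> lists (alph D)" for i using wD by (auto simp: lang_def is_word_def prefix_def)
      have "{i. (f (s (prefix w i)), w i, f (s (prefix w (Suc i)))) \<in> acc B} =
            {i. (s (prefix w i), w i, s (prefix w (Suc i))) \<in> acc D}"
        using accB sQ pl by blast
      then show "accepting B w (\<lambda>i. (f \<circ> s) (prefix w i))" using sacc wD by (simp add: accepting_def)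
    qed
    ultimately show ?thesis unfolding GFG_def by blast
  qed
  have "card (states B) = card (states D)" using card_image[OF inj] by (simp add: Bs Q_def)
  then show ?thesis using wfB gfgB langs Bs(1) by blast
qed

lemma min_no_smaller:
  fixes C :: "('q,'a) tNCW" and D :: "('p,'a) tNCW"
  assumes "minimal_GFG C" "wf_tNCW D" "GFG D" "alph D = alph C" "lang D = lang C"
    "card (states D) < card (states C)"
  shows False
proof -
  obtain B :: "(nat,'a) tNCW" where "wf_tNCW B" "alph B = alph D" "GFG B" "lang B = lang D"
     "card (states B) = card (states D)" using rename_nat[OF assms(2,3)] by blast
  then show False using assms unfolding minimal_GFG_def by auto
qed



definition auto_ok :: "('q,'a) tNCW \<Rightarrow> bool" where
  "auto_ok A \<longleftrightarrow> wf_tNCW A \<and> sem_det A \<and> safe_det A \<and> normal A"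

lemma dom_step:
  assumes oA: "auto_ok A" and oB: "auto_ok B" and al: "alph A = alph B"
    and a: "a \<in> states A" and b: "b \<in> states B" and eq: "Lq A a = Lq B b" and le: "Ls A a \<subseteq> Ls B b"
    and sg: "sg \<in> alph A" and s: "s \<in> delta_nacc A a sg"
  shows "\<exists>t \<in> delta_nacc B b sg. Lq A s = Lq B t \<and> Ls A s \<subseteq> Ls B t \<and> (Ls B b \<subseteq> Ls A a \<longrightarrow> Ls B t \<subseteq> Ls A s)"
proof -
  have wA: "wf_tNCW A" "sem_det A" "safe_det A" "normal A" using oA by (auto simp: auto_ok_def)
  have wB: "wf_tNCW B" "sem_det B" "safe_det B" "normal B" using oB by (auto simp: auto_ok_def)
  have sgB: "sg \<in> alph B" using sg al by simp
  obtain y where y: "y \<in> Ls A s" using nacc_Ls_ne[OF wA(1) wA(4) a sg s] by blast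
  have "scons sg y \<in> Ls A a" using Ls_scons[OF wA(1) wA(3) a sg s] y by simp
  then have "scons sg y \<in> Ls B b" using le by blast
  then obtain t where t: "t \<in> delta_nacc B b sg" using Ls_step by fastforce
  have "Lq A s = Lq B t"
    using succ_equiv[OF wA(1) wB(1) wA(2) wB(2) al a b eq sg, of s t] s t by (simp add: delta_nacc_def)
  moreover have "Ls A s \<subseteq> Ls B t"
  proof
    fix y' assume "y' \<in> Ls A s"
    then have "scons sg y' \<in> Ls A a" using Ls_scons[OF wA(1) wA(3) a sg s] by simp
    then have "scons sg y' \<in> Ls B b" using le by blast
    then show "y' \<in> Ls B t" using Ls_scons[OF wB(1) wB(3) b sgB t] by simp
  qed
  moreover have "Ls B t \<subseteq> Ls A s" if ge: "Ls B b \<subseteq> Ls A a"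
  proof
    fix y' assume "y' \<in> Ls B t"
    then have "scons sg y' \<in> Ls B b" using Ls_scons[OF wB(1) wB(3) b sgB t] by simp
    then have "scons sg y' \<in> Ls A a" using ge by blast
    then show "y' \<in> Ls A s" using Ls_scons[OF wA(1) wA(3) a sg s] by simp
  qed
  ultimately show ?thesis using t by blast
qed

lemma dom_path:
  assumes oA: "auto_ok A" and oB: "auto_ok B" and al: "alph A = alph B"
  shows "a \<in> states A \<Longrightarrow> b \<in> states B \<Longrightarrow> Lq A a = Lq B b \<Longrightarrow> Ls A a \<subseteq> Ls B b \<Longrightarrow> npath A a x a' \<Longrightarrow>
    \<exists>b'. npath B b x b' \<and> Lq A a' = Lq B b' \<and> Ls A a' \<subseteq> Ls B b' \<and> (Ls B b \<subseteq> Ls A a \<longrightarrow> Ls B b' \<subseteq> Ls A a')"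
proof (induction x arbitrary: a b)
  case Nil then show ?case by simp
next
  case (Cons sg x)
  have wA: "wf_tNCW A" and wB: "wf_tNCW B" using oA oB by (auto simp: auto_ok_def)
  from Cons.prems obtain s where s: "s \<in> delta_nacc A a sg" "npath A s x a'" and sg: "sg \<in> alph A" by auto
  obtain t where t: "t \<in> delta_nacc B b sg" "Lq A s = Lq B t" "Ls A s \<subseteq> Ls B t"
    "Ls B b \<subseteq> Ls A a \<longrightarrow> Ls B t \<subseteq> Ls A s"
    using dom_step[OF oA oB al Cons.prems(1-4) sg s(1)] by blast
  have sA: "s \<in> states A" using nacc_in[OF wA Cons.prems(1) sg s(1)] .
  have tB: "t \<in> states B" using nacc_in[OF wB Cons.prems(2) _ t(1)] sg al by simp
  obtain b' where "npath B t x b'" "Lq A a' = Lq B b'" "Ls A a' \<subseteq> Ls B b'" "Ls B t \<subseteq> Ls A s \<longrightarrow> Ls B b' \<subseteq> Ls A a'"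
    using Cons.IH[OF sA tB t(2) t(3) s(2)] by blast
  then show ?case using t sg al by auto
qed

lemma nice_ok: "wf_tNCW C \<Longrightarrow> nice C \<Longrightarrow> auto_ok C"
  by (simp add: nice_def auto_ok_def)

lemma safe_minimal:
  assumes wf: "wf_tNCW C" and ni: "nice C" and mi: "minimal_GFG C"
    and p: "p \<in> states C" and p': "p' \<in> states C" and eq: "Lq C p = Lq C p'" and eqs: "Ls C p = Ls C p'"
  shows "p = p'"
proof (rule ccontr)
  assume ne: "p \<noteq> p'"
  define Q' where "Q' = states C - {p'}"
  define rho where "rho q = (if q = p' then p else q)" for q
  have rs: "red_setup C Q' rho"
  proof
    show "wf_tNCW C" "sem_det C" "safe_det C" "normal C" using wf ni by (auto simp: nice_def)
    show "GFG C" using mi by (simp add: minimal_GFG_def)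
    show "Q' \<subseteq> states C" by (auto simp: Q'_def)
    fix q assume "q \<in> states C"
    then show "rho q \<in> Q' \<and> Lq C (rho q) = Lq C q \<and> Ls C q \<subseteq> Ls C (rho q)"
      using p ne eq eqs by (auto simp: rho_def Q'_def)
  next
    fix d sg s show "Ls C (rho s) \<subseteq> Ls C s" using eqs by (auto simp: rho_def)
  qed
  have fin: "finite (states C)" using wf by (simp add: wf_tNCW_def)
  have "card Q' < card (states C)" unfolding Q'_def using card_Diff1_less[OF fin p'] .
  then show False
    using red_setup.red_main[OF rs] min_no_smaller[OF mi, of "redD C Q' rho"] by auto
qed

lemma nstep_in: "wf_tNCW C \<Longrightarrow> (p, q) \<in> nacc_step C \<Longrightarrow> q \<in> states C \<and> p \<in> states C"
  unfolding nacc_step_def wf_tNCW_def delta_nacc_def by blast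

lemma safe_central:
  assumes wf: "wf_tNCW C" and ni: "nice C" and mi: "minimal_GFG C"
    and p: "p \<in> states C" and p': "p' \<in> states C" and eq: "Lq C p = Lq C p'" and le: "Ls C p \<subseteq> Ls C p'"
  shows "(p, p') \<in> (nacc_step C)\<^sup>*"
proof (rule ccontr)
  assume np: "(p, p') \<notin> (nacc_step C)\<^sup>*"
  have ok: "auto_ok C" using nice_ok[OF wf ni] .
  have nm: "normal C" using ni by (simp add: nice_def)
  define S where "S = {q. (p, q) \<in> (nacc_step C)\<^sup>*}"
  define Q' where "Q' = states C - S"
  have ex: "\<exists>q'. q' \<in> Q' \<and> Lq C q' = Lq C q \<and> Ls C q \<subseteq> Ls C q'" if q: "q \<in> S" for q
  proof -
    have pq: "(p, q) \<in> (nacc_step C)\<^sup>*" using q S_def by blast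
    obtain x where x: "npath C p x q" using nstep_npath[OF pq] by (elim exE)
    obtain q' where q': "npath C p' x q'" "Lq C q = Lq C q'" "Ls C q \<subseteq> Ls C q'"
      using dom_path[OF ok ok refl p p' eq le x] by blast
    have q'C: "q' \<in> states C" using npath_in[OF wf p' q'(1)] .
    have "(p', q') \<in> (nacc_step C)\<^sup>*" using npath_nstep[OF wf p' q'(1)] .
    then have "(q', p') \<in> (nacc_step C)\<^sup>*" using nm by (simp add: normal_def)
    then have "q' \<notin> S" using np S_def by (meson rtrancl_trans mem_Collect_eq)
    then show ?thesis using q'C q' Q'_def by auto
  qed
  define rho where "rho q = (if q \<in> S then (SOME q'. q' \<in> Q' \<and> Lq C q' = Lq C q \<and> Ls C q \<subseteq> Ls C q') else q)" for q
  have rs: "red_setup C Q' rho"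
  proof
    show "wf_tNCW C" "sem_det C" "safe_det C" "normal C" using wf ni by (auto simp: nice_def)
    show "GFG C" using mi by (simp add: minimal_GFG_def)
    show "Q' \<subseteq> states C" by (auto simp: Q'_def)
    fix q assume q: "q \<in> states C"
    show "rho q \<in> Q' \<and> Lq C (rho q) = Lq C q \<and> Ls C q \<subseteq> Ls C (rho q)"
    proof (cases "q \<in> S")
      case True
      then show ?thesis using someI_ex[OF ex[OF True]] by (simp add: rho_def)
    next
      case False
      then show ?thesis using q by (simp add: rho_def Q'_def)
    qed
  next
    fix d sg s assume d: "d \<in> Q'" and sg: "sg \<in> alph C" and s: "s \<in> delta_nacc C d sg"
    have "(d, s) \<in> nacc_step C" using d sg s by (auto simp: nacc_step_def Q'_def)
    then have "(d, s) \<in> (nacc_step C)\<^sup>*" by (rule r_into_rtrancl)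
    then have "(s, d) \<in> (nacc_step C)\<^sup>*" using nm unfolding normal_def by blast
    then have "s \<notin> S" using d by (auto simp: S_def Q'_def intro: rtrancl_trans)
    then show "Ls C (rho s) \<subseteq> Ls C s" by (simp add: rho_def)
  qed
  have fin: "finite (states C)" using wf by (simp add: wf_tNCW_def)
  have "p \<in> S" by (simp add: S_def)
  then have "Q' \<subset> states C" using p Q'_def by blast
  then have "card Q' < card (states C)" using psubset_card_mono[OF fin] by blast
  then show False
    using red_setup.red_main[OF rs] min_no_smaller[OF mi, of "redD C Q' rho"] by auto
qed



lemma Delta_from_state[simp]: "Delta (from_state B q) = Delta B"
  by (simp add: Delta_def from_state_def)

lemma Lq_from_state: "lang (from_state B q) = Lq B q" by (simp add: Lq_def)

lemma prefix_take:
  assumes "prefix w L = U" "k \<le> L"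
  shows "prefix w k = take k U"
  using assms by (auto simp: prefix_def take_map)

lemma some_pair:
  assumes "P a b"
  shows "P (fst (SOME p. P (fst p) (snd p))) (snd (SOME p. P (fst p) (snd p)))"
proof -
  have "P (fst (a, b)) (snd (a, b))" using assms by simp
  then show ?thesis by (rule someI)
qed

lemma strat_in:
  assumes wf: "wf_tNCW B" and g0: "g [] \<in> states B"
    and gD: "\<forall>u \<in> lists (alph B). \<forall>sg \<in> alph B. (g u, sg, g (u @ [sg])) \<in> Delta B"
  shows "u \<in> lists (alph B) \<Longrightarrow> g u \<in> states B"
proof (induction u rule: rev_induct)
  case Nil then show ?case using g0 by simp
next
  case (snoc x xs)
  then have "xs \<in> lists (alph B)" "x \<in> alph B" by auto
  then have "g (xs @ [x]) \<in> trans B (g xs) x" using gD by (auto simp: Delta_def)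
  then show ?case using trans_in[OF wf snoc.IH] snoc.prems \<open>x \<in> alph B\<close> by auto
qed

lemma exists_dom:
  fixes A :: "('q,'a) tNCW" and B :: "('p,'a) tNCW"
  assumes oA: "auto_ok A" and oB: "auto_ok B" and al: "alph A = alph B" and gB: "GFG_state B q"
    and p: "p \<in> states A" and q: "q \<in> states B" and eq: "Lq A p = Lq B q"
  shows "\<exists>x p1 q1. npath A p x p1 \<and> q1 \<in> states B \<and> Lq A p1 = Lq B q1 \<and> Ls A p1 \<subseteq> Ls B q1"
proof (rule ccontr)
  assume "\<not> ?thesis"
  then have H: "\<And>x p1 q1. npath A p x p1 \<Longrightarrow> q1 \<in> states B \<Longrightarrow> Lq A p1 = Lq B q1 \<Longrightarrow> \<not> Ls A p1 \<subseteq> Ls B q1"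
    by blast
  have wA: "wf_tNCW A" "sem_det A" "safe_det A" using oA by (auto simp: auto_ok_def)
  have wB: "wf_tNCW B" "sem_det B" "safe_det B" using oB by (auto simp: auto_ok_def)
  obtain g where g0: "g [] = q"
    and gD: "\<forall>u \<in> lists (alph B). \<forall>sg \<in> alph B. (g u, sg, g (u @ [sg])) \<in> Delta B"
    and gacc: "\<forall>w \<in> Lq B q. accepting B w (\<lambda>i. g (prefix w i))"
    using gB unfolding GFG_state_def GFG_def by (auto simp: Lq_from_state) (auto simp: from_state_def accepting_def)
  have gin: "u \<in> lists (alph B) \<Longrightarrow> g u \<in> states B" for u
    using strat_in[OF wB(1) _ gD] g0 q by simp
  have gpath: "v \<in> lists (alph B) \<Longrightarrow> tpath B (g u) v (g (u @ v))" if u: "u \<in> lists (alph B)" for u v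
  proof (induction v rule: rev_induct)
    case Nil then show ?case by simp
  next
    case (snoc x xs)
    then have "xs \<in> lists (alph B)" "x \<in> alph B" by auto
    moreover have "u @ xs \<in> lists (alph B)" using u calculation by simp
    then have "(g (u @ xs), x, g ((u @ xs) @ [x])) \<in> Delta B" using gD \<open>x \<in> alph B\<close> by blast
    then have "(g (u @ xs), x, g (u @ xs @ [x])) \<in> Delta B" by simp
    ultimately show ?case using snoc tpath_snoc[of B "g u" xs x] by (auto simp: Delta_def)
  qed
  define I where "I u a \<longleftrightarrow> u \<in> lists (alph A) \<and> npath A p u a \<and> Lq A a = Lq B (g u)" for u a
  define Good where "Good u u' a' \<longleftrightarrow> (\<exists>v. u' = u @ v \<and> v \<noteq> [] \<and> I u' a' \<and>
      (\<exists>j < length v. (g (u @ take j v), v ! j, g (u @ take (Suc j) v)) \<in> acc B))" for u u' a'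
  have step: "\<exists>u' a'. Good u u' a'" if Iua: "I u a" for u a
  proof -
    have u: "u \<in> lists (alph A)" "npath A p u a" "Lq A a = Lq B (g u)" using Iua I_def by auto
    have uB: "u \<in> lists (alph B)" using u al by simp
    have aA: "a \<in> states A" using npath_in[OF wA(1) p u(2)] .
    have guB: "g u \<in> states B" using gin[OF uB] .
    obtain z where z: "z \<in> Ls A a" "z \<notin> Ls B (g u)" using H[OF u(2) guB u(3)] by blast
    have zw: "is_word A z" using z by (simp add: Ls_def)
    have zl: "prefix z k \<in> lists (alph B)" for k using zw al by (auto simp: prefix_def is_word_def)
    define rr where "rr k = g (u @ prefix z k)" for k
    have rrD: "(rr k, z k, rr (Suc k)) \<in> Delta B" for k
    proof -
      have "u @ prefix z k \<in> lists (alph B)" "z k \<in> alph B" using uB zl[of k] zw al by (auto simp: is_word_def)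
      then have "(g (u @ prefix z k), z k, g ((u @ prefix z k) @ [z k])) \<in> Delta B" using gD by blast
      then show ?thesis unfolding rr_def prefix_Suc by simp
    qed
    obtain k where k: "(rr k, z k, rr (Suc k)) \<in> acc B"
    proof (rule ccontr)
      assume "\<not> thesis"
      then have nacc: "\<forall>k. (rr k, z k, rr (Suc k)) \<notin> acc B" using that by blast
      have "safe_run B (g u) z rr" unfolding safe_run_def
        using nacc rrD by (auto simp: rr_def delta_nacc_def Delta_def)
      then have "z \<in> Ls B (g u)" using zw al by (auto simp: Ls_def is_word_def)
      then show False using z by simp
    qed
    obtain r where r: "safe_run A a z r" using z by (auto simp: Ls_def)
    define v where "v = prefix z (Suc k)"
    have np: "npath A a v (r (Suc k))" using safe_run_npath[OF r zw] v_def by simp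
    have npu: "npath A p (u @ v) (r (Suc k))" unfolding npath_append using u(2) np by blast
    have vB: "v \<in> lists (alph B)" using zl v_def by simp
    have "Lq A (r (Suc k)) = Lq B (g (u @ v))"
      using tpath_equiv[OF wA(1) wB(1) wA(2) wB(2) al aA guB u(3) npath_tpath[OF np] gpath[OF uB vB]] .
    then have I2: "I (u @ v) (r (Suc k))" using I_def npu u(1) vB al by simp
    have tk: "take k v = prefix z k" "v ! k = z k" "take (Suc k) v = v" "length v = Suc k"
      by (simp_all add: v_def prefix_def take_map del: upt_Suc)
    have "(g (u @ take k v), v ! k, g (u @ take (Suc k) v)) \<in> acc B"
      using k tk by (simp add: rr_def v_def)
    then have "Good u (u @ v) (r (Suc k))" unfolding Good_def using I2 tk by (intro exI[of _ v]) auto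
    then show ?thesis by blast
  qed
  define F :: "'a list \<times> 'q \<Rightarrow> 'a list \<times> 'q" where "F = (\<lambda>(u, a). SOME pr. Good u (fst pr) (snd pr))"
  define X where "X n = (F ^^ n) ([], p)" for n
  have XS: "X (Suc n) = F (X n)" for n by (simp add: X_def)
  have IX: "I (fst (X n)) (snd (X n)) \<and> Good (fst (X n)) (fst (X (Suc n))) (snd (X (Suc n)))" for n
  proof (induction n)
    case 0
    have I0: "I [] p" using eq g0 by (simp add: I_def)
    then obtain u' a' where "Good [] u' a'" using step by blast
    then have "Good [] (fst (F ([], p))) (snd (F ([], p)))" unfolding F_def
      by (simp add: case_prod_beta some_pair)
    then show ?case using I0 XS by (simp add: X_def)
  next
    case (Suc n)
    then have I1: "I (fst (X (Suc n))) (snd (X (Suc n)))" by (auto simp: Good_def)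
    then obtain u' a' where "Good (fst (X (Suc n))) u' a'" using step by blast
    then have "Good (fst (X (Suc n))) (fst (F (X (Suc n)))) (snd (F (X (Suc n))))"
      unfolding F_def by (simp add: case_prod_beta some_pair)
    then show ?case using I1 XS[of "Suc n"] by simp
  qed
  define U where "U n = fst (X n)" for n
  have lenU: "length (U n) \<ge> n" for n
  proof (induction n)
    case 0 then show ?case by simp
  next
    case (Suc n)
    then show ?case using IX[of n] unfolding Good_def U_def by auto
  qed
  have Umono: "\<exists>v. U (n + m) = U n @ v" for n m
  proof (induction m)
    case 0 then show ?case by simp
  next
    case (Suc m)
    then obtain v where "U (n + m) = U n @ v" by blast
    moreover obtain v' where "U (Suc (n + m)) = U (n + m) @ v'" using IX[of "n + m"] unfolding Good_def U_def by auto
    ultimately show ?case by auto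
  qed
  define w where "w k = U (Suc k) ! k" for k
  have wU: "w k = U n ! k" if k: "k < length (U n)" for n k
  proof (cases "Suc k \<le> n")
    case True
    then obtain v where "U n = U (Suc k) @ v" using Umono[of "Suc k" "n - Suc k"] by auto
    moreover have "k < length (U (Suc k))" using lenU[of "Suc k"] by simp
    ultimately show ?thesis by (simp add: w_def nth_append)
  next
    case False
    then obtain v where "U (Suc k) = U n @ v" using Umono[of n "Suc k - n"] by auto
    then show ?thesis using k by (simp add: w_def nth_append)
  qed
  have pU: "prefix w (length (U n)) = U n" for n
    by (rule nth_equalityI) (simp_all add: prefix_def wU)
  have UA: "U n \<in> lists (alph A)" for n using IX[of n] by (simp add: I_def U_def)
  have ww: "is_word A w"
    unfolding is_word_def
  proof
    fix k have "k < length (U (Suc k))" using lenU[of "Suc k"] by simp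
    then show "w k \<in> alph A" using UA[of "Suc k"] unfolding w_def by (metis in_listsD nth_mem)
  qed
  have "w \<in> Ls A p"
  proof (rule Ls_char[OF wA(1) wA(3) p ww], intro allI)
    fix n
    have pn: "prefix w n = take n (U n)" using prefix_take[OF pU lenU] .
    have "npath A p (U n) (snd (X n))" using IX[of n] by (simp add: I_def U_def)
    then have "npath A p (take n (U n) @ drop n (U n)) (snd (X n))" by simp
    then show "\<exists>q. npath A p (prefix w n) q" unfolding npath_append pn by blast
  qed
  then have wLs: "w \<in> Ls A p" .
  have "w \<in> Lq A p" using Ls_Lq[of A p] wLs by (rule subsetD)
  then have "w \<in> Lq B q" using eq by simp
  then have "finite {i. (g (prefix w i), w i, g (prefix w (Suc i))) \<in> acc B}" using gacc by (simp add: accepting_def)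
  then obtain N where N: "\<forall>i \<in> {i. (g (prefix w i), w i, g (prefix w (Suc i))) \<in> acc B}. i < N"
    using finite_nat_set_iff_bounded by blast
  obtain v j where v: "U (Suc N) = U N @ v" "j < length v"
    "(g (U N @ take j v), v ! j, g (U N @ take (Suc j) v)) \<in> acc B"
    using IX[of N] unfolding Good_def U_def by auto
  define i where "i = length (U N) + j"
  have iL: "Suc i \<le> length (U (Suc N))" using v i_def by simp
  have "prefix w i = U N @ take j v" using prefix_take[OF pU[of "Suc N"], of i] iL v(1) i_def by simp
  moreover have "prefix w (Suc i) = U N @ take (Suc j) v" using prefix_take[OF pU[of "Suc N"], of "Suc i"] iL v(1) i_def by simp
  moreover have "w i = v ! j" using wU[of i "Suc N"] iL v(1) i_def by (simp add: nth_append)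
  ultimately have "i \<in> {i. (g (prefix w i), w i, g (prefix w (Suc i))) \<in> acc B}" using v(3) by simp
  then have "i < N" using N by blast
  moreover have "i \<ge> N" using lenU[of N] i_def by simp
  ultimately show False by simp
qed



definition SC :: "('q,'a) tNCW \<Rightarrow> bool" where
  "SC A \<longleftrightarrow> (\<forall>p \<in> states A. \<forall>p' \<in> states A. Lq A p = Lq A p' \<and> Ls A p \<subseteq> Ls A p' \<longrightarrow> (p, p') \<in> (nacc_step A)\<^sup>*)"

definition allGFG :: "('q,'a) tNCW \<Rightarrow> bool" where
  "allGFG A \<longleftrightarrow> (\<forall>q \<in> states A. GFG_state A q)"

lemma Y_lemma:
  fixes A :: "('q,'a) tNCW" and B :: "('p,'a) tNCW"
  assumes oA: "auto_ok A" and oB: "auto_ok B" and al: "alph A = alph B" and sc: "SC A" and gA: "allGFG A"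
    and a: "a \<in> states A" and b: "b \<in> states B" and eq: "Lq A a = Lq B b" and le: "Ls A a \<subseteq> Ls B b"
  shows "\<exists>a' \<in> states A. (a, a') \<in> (nacc_step A)\<^sup>* \<and> Lq B b = Lq A a' \<and> Ls B b \<subseteq> Ls A a'"
proof -
  have wA: "wf_tNCW A" using oA by (simp add: auto_ok_def)
  have wB: "wf_tNCW B" "normal B" using oB by (auto simp: auto_ok_def)
  obtain y b2 a2 where y: "npath B b y b2" "a2 \<in> states A" "Lq B b2 = Lq A a2" "Ls B b2 \<subseteq> Ls A a2"
    using exists_dom[OF oB oA al[symmetric] _ b a eq[symmetric]] gA a unfolding allGFG_def by blast
  have b2: "b2 \<in> states B" using npath_in[OF wB(1) b y(1)] .
  have "(b, b2) \<in> (nacc_step B)\<^sup>*" using npath_nstep[OF wB(1) b y(1)] .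
  then have bb: "(b2, b) \<in> (nacc_step B)\<^sup>*" using wB(2) unfolding normal_def by blast
  obtain y' where y': "npath B b2 y' b" using nstep_npath[OF bb] by (elim exE)
  obtain a' where a': "npath A a2 y' a'" "Lq B b = Lq A a'" "Ls B b \<subseteq> Ls A a'"
    using dom_path[OF oB oA al[symmetric] b2 y(2) y(3) y(4) y'] by blast
  have a'A: "a' \<in> states A" using npath_in[OF wA y(2) a'(1)] .
  have "Lq A a = Lq A a'" "Ls A a \<subseteq> Ls A a'" using eq le a' by auto
  then have "(a, a') \<in> (nacc_step A)\<^sup>*" using sc a a'A unfolding SC_def by blast
  then show ?thesis using a'A a' by blast
qed

lemma partner:
  fixes A :: "('q,'a) tNCW" and B :: "('p,'a) tNCW"
  assumes oA: "auto_ok A" and oB: "auto_ok B" and al: "alph A = alph B"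
    and scA: "SC A" and scB: "SC B" and gA: "allGFG A" and gB: "allGFG B"
    and p: "p \<in> states A" and q0: "q0 \<in> states B" and eq0: "Lq A p = Lq B q0"
  shows "\<exists>q \<in> states B. Lq A p = Lq B q \<and> Ls A p = Ls B q"
proof -
  have wA: "wf_tNCW A" "normal A" using oA by (auto simp: auto_ok_def)
  have wB: "wf_tNCW B" using oB by (auto simp: auto_ok_def)
  define K where "K = {r \<in> states A. (p, r) \<in> (nacc_step A)\<^sup>*}"
  define Fam where "Fam = Ls A ` {r \<in> K. \<exists>q \<in> states B. Lq A r = Lq B q \<and> Ls A r \<subseteq> Ls B q}"
  have finK: "finite K" using wA(1) by (auto simp: K_def wf_tNCW_def)
  have finF: "finite Fam" unfolding Fam_def using finK by simp
  obtain x p1 q1 where x: "npath A p x p1" "q1 \<in> states B" "Lq A p1 = Lq B q1" "Ls A p1 \<subseteq> Ls B q1"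
    using exists_dom[OF oA oB al _ p q0 eq0] gB q0 unfolding allGFG_def by blast
  have "p1 \<in> K" using npath_in[OF wA(1) p x(1)] npath_nstep[OF wA(1) p x(1)] by (simp add: K_def)
  then have neF: "Fam \<noteq> {}" using x unfolding Fam_def by blast
  obtain m where m: "m \<in> Fam" "\<And>b. b \<in> Fam \<Longrightarrow> m \<subseteq> b \<Longrightarrow> m = b"
    using finite_has_maximal[OF finF neF] by blast
  then obtain r q where r: "r \<in> K" "q \<in> states B" "Lq A r = Lq B q" "Ls A r \<subseteq> Ls B q" "m = Ls A r"
    unfolding Fam_def by blast
  have rA: "r \<in> states A" using r K_def by simp
  obtain r' where r': "r' \<in> states A" "(r, r') \<in> (nacc_step A)\<^sup>*" "Lq B q = Lq A r'" "Ls B q \<subseteq> Ls A r'"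
    using Y_lemma[OF oA oB al scA gA rA r(2) r(3) r(4)] by blast
  obtain q' where q': "q' \<in> states B" "Lq A r' = Lq B q'" "Ls A r' \<subseteq> Ls B q'"
    using Y_lemma[OF oB oA al[symmetric] scB gB r(2) r'(1) r'(3) r'(4)] by blast
  have "r' \<in> K" using r(1) r'(1,2) unfolding K_def by (auto intro: rtrancl_trans)
  then have "Ls A r' \<in> Fam" using q' unfolding Fam_def by blast
  moreover have "m \<subseteq> Ls A r'" using r(4,5) r'(4) by blast
  ultimately have "m = Ls A r'" using m(2) by blast
  then have eqs: "Ls B q \<subseteq> Ls A r" using r(5) r'(4) by simp
  have "(p, r) \<in> (nacc_step A)\<^sup>*" using r(1) K_def by simp
  then have rp: "(r, p) \<in> (nacc_step A)\<^sup>*" using wA(2) unfolding normal_def by blast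
  obtain y where y: "npath A r y p" using nstep_npath[OF rp] by (elim exE)
  obtain q'' where q'': "npath B q y q''" "Lq A p = Lq B q''" "Ls A p \<subseteq> Ls B q''" "Ls B q \<subseteq> Ls A r \<longrightarrow> Ls B q'' \<subseteq> Ls A p"
    using dom_path[OF oA oB al rA r(2) r(3) r(4) y] by blast
  have qB: "q'' \<in> states B" using npath_in[OF wB r(2) q''(1)] .
  have "Ls B q'' \<subseteq> Ls A p" using q''(4) eqs by (rule mp)
  then have "Ls A p = Ls B q''" using q''(3) by (rule subset_antisym[rotated])
  then show ?thesis using qB q''(2) by blast
qed

lemma nice_SC:
  assumes "wf_tNCW C" "nice C" "minimal_GFG C"
  shows "SC C"
  unfolding SC_def
proof (intro ballI impI)
  fix p p' assume "p \<in> states C" "p' \<in> states C" and h: "Lq C p = Lq C p' \<and> Ls C p \<subseteq> Ls C p'"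
  then show "(p, p') \<in> (nacc_step C)\<^sup>*" using safe_central[OF assms \<open>p \<in> states C\<close> \<open>p' \<in> states C\<close>] h by blast
qed

lemma nice_allGFG: "nice C \<Longrightarrow> allGFG C"
  by (simp add: nice_def allGFG_def)

lemma reach_equiv:
  fixes A :: "('q,'a) tNCW" and B :: "('p,'a) tNCW"
  assumes oA: "auto_ok A" and oB: "auto_ok B" and al: "alph A = alph B" and ll: "lang A = lang B"
    and r: "reachable A p"
  shows "\<exists>q \<in> states B. Lq A p = Lq B q"
proof -
  have wA: "wf_tNCW A" "sem_det A" and wB: "wf_tNCW B" "sem_det B" using oA oB by (auto simp: auto_ok_def)
  obtain x where x: "tpath A (init A) x p" using reachable_tpath[OF r] by blast
  have iA: "init A \<in> states A" and iB: "init B \<in> states B" using wA wB by (auto simp: wf_tNCW_def)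
  have "x \<in> lists (alph B)" using tpath_lists[OF x] al by simp
  then obtain q where q: "tpath B (init B) x q" using tpath_exists[OF wB(1) iB] by blast
  have "Lq A (init A) = Lq B (init B)" using ll by (simp add: lang_Lq)
  then have "Lq A p = Lq B q" using tpath_equiv[OF wA(1) wB(1) wA(2) wB(2) al iA iB _ x q] by simp
  then show ?thesis using tpath_in[OF wB(1) iB q] by blast
qed

lemma dacc_char:
  assumes wf: "wf_tNCW C" and am: "alpha_maximal_uth C" and q: "q \<in> states C" and sg: "sg \<in> alph C"
    and x: "x \<in> states C"
  shows "x \<in> delta_acc C q sg \<longleftrightarrow> delta_nacc C q sg = {} \<and> (\<exists>s \<in> trans C q sg. Lq C x = Lq C s)"
proof
  assume xa: "x \<in> delta_acc C q sg"
  then have "delta_acc C q sg \<noteq> {}" by blast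
  then have "delta_nacc C q sg = {}" using am q sg unfolding alpha_maximal_uth_def alpha_homogenous_def by blast
  then show "delta_nacc C q sg = {} \<and> (\<exists>s \<in> trans C q sg. Lq C x = Lq C s)" using xa by (auto simp: delta_acc_def)
next
  assume h: "delta_nacc C q sg = {} \<and> (\<exists>s \<in> trans C q sg. Lq C x = Lq C s)"
  then obtain s where s: "s \<in> trans C q sg" "Lq C x = Lq C s" by blast
  have "allowed C q sg x" unfolding allowed_def equiv_st_Lq using q sg x s
    by (auto simp: Delta_def)
  then have "(q, sg, x) \<in> Delta C" using am h q sg x unfolding alpha_maximal_uth_def by blast
  then have "x \<in> trans C q sg" by (simp add: Delta_def)
  then show "x \<in> delta_acc C q sg" using h by (auto simp: delta_acc_def delta_nacc_def)
qed



theorem mainTheorem4: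
  fixes C1 :: "('q1, 'a) tNCW" and C2 :: "('q2, 'a) tNCW"
  assumes "wf_tNCW C1" and "wf_tNCW C2"
    and "alph C1 = alph C2"
    and "nice C1" and "nice C2"
    and "GFG C1" and "GFG C2"
    and "lang C1 = lang C2"
    and "minimal_GFG C1" and "minimal_GFG C2"
    and "alpha_maximal_uth C1" and "alpha_maximal_uth C2"
  shows "isomorphic C1 C2"
proof -
  note wf1 = assms(1) and wf2 = assms(2) and al = assms(3) and ni1 = assms(4) and ni2 = assms(5)
    and ll = assms(8) and mi1 = assms(9) and mi2 = assms(10) and am1 = assms(11) and am2 = assms(12)
  have o1: "auto_ok C1" using nice_ok[OF wf1 ni1] .
  have o2: "auto_ok C2" using nice_ok[OF wf2 ni2] .
  have sem1: "sem_det C1" and sem2: "sem_det C2" using ni1 ni2 by (auto simp: nice_def)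
  have sc1: "SC C1" using nice_SC[OF wf1 ni1 mi1] .
  have sc2: "SC C2" using nice_SC[OF wf2 ni2 mi2] .
  have ga1: "allGFG C1" using nice_allGFG[OF ni1] .
  have ga2: "allGFG C2" using nice_allGFG[OF ni2] .
  have part12: "\<exists>q \<in> states C2. Lq C1 p = Lq C2 q \<and> Ls C1 p = Ls C2 q" if p: "p \<in> states C1" for p
  proof -
    have "reachable C1 p" using ni1 p by (simp add: nice_def)
    then obtain q0 where "q0 \<in> states C2" "Lq C1 p = Lq C2 q0" using reach_equiv[OF o1 o2 al ll] by blast
    then show ?thesis using partner[OF o1 o2 al sc1 sc2 ga1 ga2 p] by blast
  qed
  have part21: "\<exists>p \<in> states C1. Lq C2 q = Lq C1 p \<and> Ls C2 q = Ls C1 p" if q: "q \<in> states C2" for q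
  proof -
    have "reachable C2 q" using ni2 q by (simp add: nice_def)
    then obtain p0 where "p0 \<in> states C1" "Lq C2 q = Lq C1 p0" using reach_equiv[OF o2 o1 al[symmetric] ll[symmetric]] by blast
    then show ?thesis using partner[OF o2 o1 al[symmetric] sc2 sc1 ga2 ga1 q] by blast
  qed
  define k where "k p = (SOME q. q \<in> states C2 \<and> Lq C1 p = Lq C2 q \<and> Ls C1 p = Ls C2 q)" for p
  have kp: "k p \<in> states C2 \<and> Lq C1 p = Lq C2 (k p) \<and> Ls C1 p = Ls C2 (k p)" if p: "p \<in> states C1" for p
    unfolding k_def using someI_ex[of "\<lambda>q. q \<in> states C2 \<and> Lq C1 p = Lq C2 q \<and> Ls C1 p = Ls C2 q"] part12[OF p] by blast
  have uniq1: "\<And>p p'. p \<in> states C1 \<Longrightarrow> p' \<in> states C1 \<Longrightarrow> Lq C1 p = Lq C1 p' \<Longrightarrow> Ls C1 p = Ls C1 p' \<Longrightarrow> p = p'"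
    using safe_minimal[OF wf1 ni1 mi1] by blast
  have uniq2: "\<And>p p'. p \<in> states C2 \<Longrightarrow> p' \<in> states C2 \<Longrightarrow> Lq C2 p = Lq C2 p' \<Longrightarrow> Ls C2 p = Ls C2 p' \<Longrightarrow> p = p'"
    using safe_minimal[OF wf2 ni2 mi2] by blast
  have inj: "inj_on k (states C1)"
  proof (rule inj_onI)
    fix p p' assume "p \<in> states C1" "p' \<in> states C1" "k p = k p'"
    then have "Lq C1 p = Lq C1 p'" "Ls C1 p = Ls C1 p'"
      using kp[OF \<open>p \<in> states C1\<close>] kp[OF \<open>p' \<in> states C1\<close>] by simp_all
    then show "p = p'" using uniq1[OF \<open>p \<in> states C1\<close> \<open>p' \<in> states C1\<close>] by blast
  qed
  have img: "k ` states C1 = states C2"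
  proof
    show "k ` states C1 \<subseteq> states C2" using kp by blast
    show "states C2 \<subseteq> k ` states C1"
    proof
      fix q assume q: "q \<in> states C2"
      then obtain p where p: "p \<in> states C1" "Lq C2 q = Lq C1 p" "Ls C2 q = Ls C1 p" using part21 by blast
      have "k p \<in> states C2" "Lq C2 (k p) = Lq C2 q" "Ls C2 (k p) = Ls C2 q" using kp[OF p(1)] p by simp_all
      then have "k p = q" using uniq2[OF _ q] by blast
      then show "q \<in> k ` states C1" using p by blast
    qed
  qed
  have bij: "bij_betw k (states C1) (states C2)" using inj img by (simp add: bij_betw_def)
  have fw: "k q' \<in> delta_nacc C2 (k q) sg"
    if q: "q \<in> states C1" and q': "q' \<in> states C1" and sg: "sg \<in> alph C1" and n: "q' \<in> delta_nacc C1 q sg" for q q' sg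
  proof -
    obtain t where t: "t \<in> delta_nacc C2 (k q) sg" "Lq C1 q' = Lq C2 t" "Ls C1 q' \<subseteq> Ls C2 t"
      "Ls C2 (k q) \<subseteq> Ls C1 q \<longrightarrow> Ls C2 t \<subseteq> Ls C1 q'"
      using dom_step[OF o1 o2 al q _ _ _ sg n] kp[OF q] by blast
    have tQ: "t \<in> states C2" using nacc_in[OF wf2 _ _ t(1)] kp[OF q] sg al by simp
    have "Ls C1 q' = Ls C2 t" using t kp[OF q] by auto
    then have "t = k q'" using uniq2[OF tQ] kp[OF q'] t(2) by simp
    then show ?thesis using t(1) by simp
  qed
  have bw: "q' \<in> delta_nacc C1 q sg"
    if q: "q \<in> states C1" and q': "q' \<in> states C1" and sg: "sg \<in> alph C1" and n: "k q' \<in> delta_nacc C2 (k q) sg" for q q' sg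
  proof -
    have sg2: "sg \<in> alph C2" using sg al by simp
    obtain t where t: "t \<in> delta_nacc C1 q sg" "Lq C2 (k q') = Lq C1 t" "Ls C2 (k q') \<subseteq> Ls C1 t"
      "Ls C1 q \<subseteq> Ls C2 (k q) \<longrightarrow> Ls C1 t \<subseteq> Ls C2 (k q')"
      using dom_step[OF o2 o1 al[symmetric] _ q _ _ sg2 n] kp[OF q] by auto
    have tQ: "t \<in> states C1" using nacc_in[OF wf1 q sg t(1)] .
    have "Ls C1 t = Ls C1 q'" using t kp[OF q] kp[OF q'] by auto
    then have "t = q'" using uniq1[OF tQ q'] kp[OF q'] t(2) by simp
    then show ?thesis using t(1) by simp
  qed
  have acc_part: "q' \<in> delta_acc C1 q sg \<longleftrightarrow> k q' \<in> delta_acc C2 (k q) sg"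
    if q: "q \<in> states C1" and q': "q' \<in> states C1" and sg: "sg \<in> alph C1" for q q' sg
  proof -
    have sg2: "sg \<in> alph C2" using sg al by simp
    have kq: "k q \<in> states C2" and kq': "k q' \<in> states C2" using kp q q' by auto
    have e1: "delta_nacc C1 q sg = {} \<longleftrightarrow> delta_nacc C2 (k q) sg = {}"
    proof
      assume h: "delta_nacc C1 q sg = {}"
      show "delta_nacc C2 (k q) sg = {}"
      proof (rule ccontr)
        assume "delta_nacc C2 (k q) sg \<noteq> {}"
        then obtain t where t: "t \<in> delta_nacc C2 (k q) sg" by blast
        then have "t \<in> states C2" using nacc_in[OF wf2 kq sg2] by blast
        then obtain s where s: "s \<in> states C1" "t = k s" using img by blast
        then show False using bw[OF q s(1) sg] t h by simp
      qed
    next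
      assume h: "delta_nacc C2 (k q) sg = {}"
      show "delta_nacc C1 q sg = {}"
      proof (rule ccontr)
        assume "delta_nacc C1 q sg \<noteq> {}"
        then obtain s where s: "s \<in> delta_nacc C1 q sg" by blast
        then have "s \<in> states C1" using nacc_in[OF wf1 q sg] by blast
        then show False using fw[OF q _ sg s] h by simp
      qed
    qed
    obtain s0 where s0: "s0 \<in> trans C1 q sg" using trans_ne[OF wf1 q sg] by blast
    obtain t0 where t0: "t0 \<in> trans C2 (k q) sg" using trans_ne[OF wf2 kq sg2] by blast
    have st: "Lq C1 s0 = Lq C2 t0" using succ_equiv[OF wf1 wf2 sem1 sem2 al q kq _ sg s0 t0] kp[OF q] by simp
    have ss: "Lq C1 s = Lq C1 s0" if "s \<in> trans C1 q sg" for s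
      using succ_equiv[OF wf1 wf1 sem1 sem1 refl q q refl sg that s0] .
    have tt: "Lq C2 t = Lq C2 t0" if "t \<in> trans C2 (k q) sg" for t
      using succ_equiv[OF wf2 wf2 sem2 sem2 refl kq kq refl sg2 that t0] .
    have e2: "(\<exists>s \<in> trans C1 q sg. Lq C1 q' = Lq C1 s) \<longleftrightarrow> Lq C1 q' = Lq C1 s0"
      using ss s0 by blast
    have e3: "(\<exists>t \<in> trans C2 (k q) sg. Lq C2 (k q') = Lq C2 t) \<longleftrightarrow> Lq C2 (k q') = Lq C2 t0"
      using tt t0 by blast
    have e4: "Lq C1 q' = Lq C1 s0 \<longleftrightarrow> Lq C2 (k q') = Lq C2 t0" using st kp[OF q'] by simp
    have "q' \<in> delta_acc C1 q sg \<longleftrightarrow> delta_nacc C1 q sg = {} \<and> Lq C1 q' = Lq C1 s0"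
      using dacc_char[OF wf1 am1 q sg q'] e2 by blast
    also have "\<dots> \<longleftrightarrow> delta_nacc C2 (k q) sg = {} \<and> Lq C2 (k q') = Lq C2 t0" using e1 e4 by blast
    also have "\<dots> \<longleftrightarrow> k q' \<in> delta_acc C2 (k q) sg"
      using dacc_char[OF wf2 am2 kq sg2 kq'] e3 by blast
    finally show ?thesis .
  qed
  show ?thesis unfolding isomorphic_def
  proof (intro exI[of _ k] conjI ballI)
    show "bij_betw k (states C1) (states C2)" using bij .
    fix q q' sg assume a: "q \<in> states C1" "q' \<in> states C1" "sg \<in> alph C1"
    show "q' \<in> delta_nacc C1 q sg \<longleftrightarrow> k q' \<in> delta_nacc C2 (k q) sg"
      using fw[OF a] bw[OF a] by blast
    show "q' \<in> delta_acc C1 q sg \<longleftrightarrow> k q' \<in> delta_acc C2 (k q) sg"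
      using acc_part[OF a] .
  qed
qed

end
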